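(* Let $G_1$ and $G_2$ be two graphs of order $n$ with the same adjacency spectra but different degree sequences. Assume there are vertices $x_1$ of $G_1$ and $x_2$ of $G_2$ such that $G_1-\{x_1\}$ and $G_2-\{x_2\}$ have the same adjacency spectra, and let $U_i$ be the vertex set of $G_i-\{x_i\}$. For any graph $\Gamma$ with a fixed vertex $y$, let $G_i'$ be the coalescence of $(G_i,x_i)$ with $(\Gamma,y)$. Then $G_1'$ and $G_2'$ have the same adjacency spectrum for every $(\Gamma,y)$. Moreover, if $G_1$ and $G_2$ both have minimum degree at least $2$ and $\prod_{v\in U_1}(\deg(v)-1)\ne\prod_{v\in U_2}(\deg(v)-1)$, then $Z_{G_1'}\ne Z_{G_2'}$; and if $G_1$ and $G_2$ both have minimum degree at least $1$ and $\prod_{v\in U_1}\deg(v)\ne\prod_{v\in U_2}\deg(v)$, then $Z_{G_1'^*}\ne Z_{G_2'^*}$. Here $\deg(v)$ is the degree of $v$ in $G_i$ for $v\in U_i$.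
   Context: Graphs are finite and simple. The coalescence of $(G,x)$ with $(\Gamma,y)$ is the disjoint union of $G$ and $\Gamma$ with the vertices $x$ and $y$ identified. $Z_G$ is the Ihara zeta function: for a graph with adjacency matrix $A$, degree matrix $D$, $n_G$ vertices and $m_G$ edges, $Z_G(t)=(1-t^2)^{n_G-m_G}\det(I-tA+t^2(D-I))^{-1}$ (equivalently the product $\prod_{[\gamma]}(1-t^{\ell(\gamma)})^{-1}$ over rotation classes of primitive closed geodesics). The cone $G^*$ is $G$ plus a new vertex adjacent to every vertex of $G$. *)

theory Defs
  imports "HOL-Analysis.Analysis" "HOL-Computational_Algebra.Computational_Algebra"
begin

type_synonym 'a graph = "'a set \<times> ('a \<Rightarrow> 'a \<Rightarrow> bool)"

definition verts :: "'a graph \<Rightarrow> 'a set" where "verts G = fst G"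
definition adj :: "'a graph \<Rightarrow> 'a \<Rightarrow> 'a \<Rightarrow> bool" where "adj G = snd G"

definition simple_graph :: "'a graph \<Rightarrow> bool" where
  "simple_graph G \<longleftrightarrow> finite (verts G) \<and>
     (\<forall>u v. adj G u v \<longrightarrow> u \<in> verts G \<and> v \<in> verts G) \<and>
     (\<forall>u v. adj G u v \<longrightarrow> adj G v u) \<and> (\<forall>u. \<not> adj G u u)"

definition degree :: "'a graph \<Rightarrow> 'a \<Rightarrow> nat" where
  "degree G v = card {u \<in> verts G. adj G v u}"

definition num_edges :: "'a graph \<Rightarrow> nat" where
  "num_edges G = card {{u, v} | u v. adj G u v}"

definition degree_sequence :: "'a graph \<Rightarrow> nat multiset" where
  "degree_sequence G = image_mset (degree G) (mset_set (verts G))"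

definition min_degree_at_least :: "'a graph \<Rightarrow> nat \<Rightarrow> bool" where
  "min_degree_at_least G k \<longleftrightarrow> (\<forall>v \<in> verts G. k \<le> degree G v)"

definition delete_vertex :: "'a graph \<Rightarrow> 'a \<Rightarrow> 'a graph" where
  "delete_vertex G x = (verts G - {x}, \<lambda>u v. adj G u v \<and> u \<noteq> x \<and> v \<noteq> x)"

text \<open>Coalescence of (G,x) with (Gamma,y): disjoint union (via a sum type) with x and y
  identified; the identified vertex is represented by Inl x.\<close>
definition coalescence :: "'a graph \<Rightarrow> 'a \<Rightarrow> 'b graph \<Rightarrow> 'b \<Rightarrow> ('a + 'b) graph" where
  "coalescence G x \<Gamma> y =
    (Inl ` verts G \<union> Inr ` (verts \<Gamma> - {y}),
     \<lambda>p q. (case (p, q) of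
        (Inl u, Inl v) \<Rightarrow> adj G u v
      | (Inr u, Inr v) \<Rightarrow> u \<noteq> y \<and> v \<noteq> y \<and> adj \<Gamma> u v
      | (Inl u, Inr w) \<Rightarrow> u = x \<and> w \<noteq> y \<and> adj \<Gamma> y w
      | (Inr w, Inl u) \<Rightarrow> u = x \<and> w \<noteq> y \<and> adj \<Gamma> w y))"

text \<open>Cone G*: new vertex None adjacent to every vertex of G.\<close>
definition cone :: "'a graph \<Rightarrow> 'a option graph" where
  "cone G = (insert None (Some ` verts G),
     \<lambda>p q. (case (p, q) of
        (Some u, Some v) \<Rightarrow> adj G u v
      | (None, Some v) \<Rightarrow> v \<in> verts G
      | (Some u, None) \<Rightarrow> u \<in> verts G
      | (None, None) \<Rightarrow> False))"

definition det_on :: "'a set \<Rightarrow> ('a \<Rightarrow> 'a \<Rightarrow> 'r::comm_ring_1) \<Rightarrow> 'r" where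
  "det_on V M = (\<Sum>p \<in> {p. p permutes V}. of_int (sign p) * (\<Prod>v \<in> V. M v (p v)))"

definition adj_matrix :: "'a graph \<Rightarrow> 'a \<Rightarrow> 'a \<Rightarrow> 'r::comm_ring_1" where
  "adj_matrix G u v = (if adj G u v then 1 else 0)"

definition char_poly :: "'a graph \<Rightarrow> complex poly" where
  "char_poly G = det_on (verts G)
     (\<lambda>u v. (if u = v then [:0, 1:] else 0) - [:adj_matrix G u v:])"

definition adj_spectrum :: "'a graph \<Rightarrow> complex multiset" where
  "adj_spectrum G = proots (char_poly G)"

text \<open>Ihara zeta function as a formal power series in t:
  Z_G(t) = (1 - t^2)^(n - m) * det(I - tA + t^2 (D - I))^(-1).\<close>
definition ihara_poly :: "'a graph \<Rightarrow> real poly" where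
  "ihara_poly G = det_on (verts G)
     (\<lambda>u v. [: (if u = v then 1 else 0), - adj_matrix G u v,
              (if u = v then of_nat (degree G u) - 1 else 0) :])"

definition ihara_zeta :: "'a graph \<Rightarrow> real fps" where
  "ihara_zeta G = (1 - fps_X ^ 2) powi (int (card (verts G)) - int (num_edges G))
                  * inverse (fps_of_poly (ihara_poly G))"

end

theory Submission
  imports Defs
begin

section \<open>Determinant toolkit\<close>

lemma det_on_cong:
  assumes "finite V" "\<And>u v. u \<in> V \<Longrightarrow> v \<in> V \<Longrightarrow> M u v = N u v"
  shows "det_on V M = det_on V N"
  unfolding det_on_def
proof (rule sum.cong[OF refl])
  fix p assume "p \<in> {p. p permutes V}"
  hence p: "p permutes V" by simp
  show "of_int (sign p) * (\<Prod>v\<in>V. M v (p v)) = of_int (sign p) * (\<Prod>v\<in>V. N v (p v))"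
    using assms(2) permutes_in_image[OF p] by (auto intro!: prod.cong)
qed

lemma det_on_reindex:
  assumes inj: "inj_on f V" and fin: "finite V"
  shows "det_on (f ` V) M = det_on V (\<lambda>u v. M (f u) (f v))"
proof -
  let ?h = "map_permutation V f"
  let ?h' = "map_permutation (f ` V) (inv_into V f)"
  have bf: "bij_betw f V (f ` V)" using inj by (simp add: bij_betw_def)
  have bf': "bij_betw (inv_into V f) (f ` V) V" using bij_betw_inv_into[OF bf] .
  have bij: "bij_betw ?h {p. p permutes V} {q. q permutes f ` V}"
  proof (rule bij_betw_byWitness[where f'="?h'"])
    show "\<forall>a\<in>{p. p permutes V}. ?h' (?h a) = a"
      using map_permutation_compose_inv[OF bf] inj by (auto simp: inv_into_f_f)
    show "\<forall>a'\<in>{q. q permutes f ` V}. ?h (?h' a') = a'"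
      using map_permutation_compose_inv[OF bf'] by (auto simp: f_inv_into_f)
    show "?h ` {p. p permutes V} \<subseteq> {q. q permutes f ` V}"
      using map_permutation_permutes[OF bf] by auto
    show "?h' ` {q. q permutes f ` V} \<subseteq> {p. p permutes V}"
      using map_permutation_permutes[OF bf'] by auto
  qed
  have "det_on (f ` V) M = (\<Sum>p\<in>{p. p permutes V}. of_int (sign (?h p)) * (\<Prod>z\<in>f ` V. M z (?h p z)))"
    unfolding det_on_def by (rule sum.reindex_bij_betw[OF bij, symmetric])
  also have "\<dots> = det_on V (\<lambda>u v. M (f u) (f v))"
    unfolding det_on_def
  proof (rule sum.cong[OF refl])
    fix p assume "p \<in> {p. p permutes V}"
    hence p: "p permutes V" by simp
    have "(\<Prod>z\<in>f ` V. M z (?h p z)) = (\<Prod>v\<in>V. M (f v) (?h p (f v)))"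
      by (rule prod.reindex[OF inj, unfolded comp_def])
    also have "\<dots> = (\<Prod>v\<in>V. M (f v) (f (p v)))"
      using map_permutation_apply[OF inj] by (auto intro!: prod.cong)
    finally show "of_int (sign (?h p)) * (\<Prod>z\<in>f ` V. M z (?h p z)) = of_int (sign p) * (\<Prod>v\<in>V. M (f v) (f (p v)))"
      using sign_map_permutation[OF inj p fin] by simp
  qed
  finally show ?thesis .
qed

lemma det_on_diag:
  assumes "finite V" "\<And>u v. u \<in> V \<Longrightarrow> v \<in> V \<Longrightarrow> u \<noteq> v \<Longrightarrow> M u v = 0"
  shows "det_on V M = (\<Prod>v\<in>V. M v v)"
proof -
  have fin: "finite {p. p permutes V}" using assms(1) finite_permutations by blast
  have z: "(\<Sum>p\<in>{p. p permutes V} - {id}. of_int (sign p) * (\<Prod>v\<in>V. M v (p v))) = 0"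
  proof (rule sum.neutral, rule ballI)
    fix p assume "p \<in> {p. p permutes V} - {id}"
    hence p: "p permutes V" "p \<noteq> id" by auto
    then obtain v where v: "p v \<noteq> v" by (auto simp: fun_eq_iff)
    hence vV: "v \<in> V" using p(1) permutes_not_in by metis
    have "M v (p v) = 0" using assms(2)[OF vV permutes_in_image[OF p(1), THEN iffD2, OF vV]] v by auto
    hence "(\<Prod>v\<in>V. M v (p v)) = 0" using vV assms(1) by (intro prod_zero) auto
    thus "of_int (sign p) * (\<Prod>v\<in>V. M v (p v)) = 0" by simp
  qed
  have "det_on V M = of_int (sign (id::'a\<Rightarrow>'a)) * (\<Prod>v\<in>V. M v (id v))"
    unfolding det_on_def
    by (subst sum.remove[OF fin, of id]) (auto simp: permutes_id z)
  thus ?thesis by simp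
qed

lemma det_on_block:
  assumes finA: "finite A" and finB: "finite B" and disj: "A \<inter> B = {}"
    and z: "\<And>a b. a \<in> A \<Longrightarrow> b \<in> B \<Longrightarrow> M a b = 0"
  shows "det_on (A \<union> B) M = det_on A M * det_on B M"
proof -
  define T where "T = (\<lambda>r. of_int (sign r) * (\<Prod>z\<in>A \<union> B. M z (r z)))"
  define R where "R = {r. r permutes (A \<union> B) \<and> r ` A \<subseteq> A}"
  define c where "c = (\<lambda>(p::'a\<Rightarrow>'a, q::'a\<Rightarrow>'a). p \<circ> q)"
  have finAB: "finite (A \<union> B)" using finA finB by simp
  have finP: "finite {r. r permutes (A \<union> B)}" using finAB finite_permutations by blast
  have step1: "det_on (A \<union> B) M = sum T R"
    unfolding det_on_def T_def[symmetric]
  proof (rule sum.mono_neutral_right[OF finP])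
    show "R \<subseteq> {r. r permutes A \<union> B}" by (auto simp: R_def)
    show "\<forall>r\<in>{r. r permutes A \<union> B} - R. T r = 0"
    proof
      fix r assume "r \<in> {r. r permutes A \<union> B} - R"
      then obtain a where r: "r permutes A \<union> B" and a: "a \<in> A" "r a \<notin> A" by (auto simp: R_def)
      have "r a \<in> B" using permutes_in_image[OF r] a by auto
      hence "M a (r a) = 0" using z a by auto
      hence "(\<Prod>z\<in>A \<union> B. M z (r z)) = 0" using a finAB by (intro prod_zero) auto
      thus "T r = 0" by (simp add: T_def)
    qed
  qed
  have inj: "inj_on c ({p. p permutes A} \<times> {q. q permutes B})"
  proof (rule inj_onI, clarsimp simp: c_def)
    fix p q p' q' assume h: "p permutes A" "q permutes B" "p' permutes A" "q' permutes B" "p \<circ> q = p' \<circ> q'"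
    have "p x = p' x" for x
    proof (cases "x \<in> B")
      case True
      hence "x \<notin> A" using disj by auto
      thus ?thesis using h permutes_not_in by metis
    next
      case False
      hence "q x = x" "q' x = x" using h permutes_not_in by metis+
      thus ?thesis using fun_cong[OF h(5), of x] by simp
    qed
    moreover have "q x = q' x" for x
    proof (cases "x \<in> B")
      case True
      hence "q x \<in> B" "q' x \<in> B" using h permutes_in_image by metis+
      hence "q x \<notin> A" "q' x \<notin> A" using disj by auto
      hence "p (q x) = q x" "p' (q' x) = q' x" using h permutes_not_in by metis+
      thus ?thesis using fun_cong[OF h(5), of x] by simp
    next
      case False
      thus ?thesis using h permutes_not_in by metis
    qed
    ultimately show "p = p' \<and> q = q'" by auto
  qed
  have img: "c ` ({p. p permutes A} \<times> {q. q permutes B}) = R"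
  proof
    show "c ` ({p. p permutes A} \<times> {q. q permutes B}) \<subseteq> R"
    proof
      fix r assume "r \<in> c ` ({p. p permutes A} \<times> {q. q permutes B})"
      then obtain p q where h: "p permutes A" "q permutes B" and rr: "r = p \<circ> q" by (auto simp: c_def)
      have 1: "p \<circ> q permutes A \<union> B"
        by (rule permutes_compose; rule permutes_subset[OF _ ]) (use h in auto)
      have qa: "\<forall>a\<in>A. q a = a" using h(2) disj by (auto intro: permutes_not_in)
      hence "q ` A = A" by force
      hence 2: "(p \<circ> q) ` A \<subseteq> A" using permutes_image[OF h(1)] by (metis image_comp order_refl)
      show "r \<in> R" using 1 2 rr by (simp add: R_def)
    qed
    show "R \<subseteq> c ` ({p. p permutes A} \<times> {q. q permutes B})"
    proof
      fix r assume "r \<in> R"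
      hence r: "r permutes A \<union> B" "r ` A \<subseteq> A" by (auto simp: R_def)
      have injr: "inj r" using r(1) permutes_inj by blast
      have rA: "r ` A = A" by (rule endo_inj_surj[OF finA r(2)]) (use injr in \<open>auto simp: inj_on_def\<close>)
      have rB: "r ` B \<subseteq> B"
      proof
        fix y assume "y \<in> r ` B"
        then obtain b where b: "b \<in> B" "y = r b" by auto
        have "r b \<in> A \<union> B" using permutes_in_image[OF r(1)] b by auto
        moreover have "r b \<notin> A"
        proof
          assume "r b \<in> A"
          then obtain a where "a \<in> A" "r a = r b" using rA by force
          hence "a = b" using injr by (auto simp: inj_def)
          thus False using \<open>a \<in> A\<close> b disj by auto
        qed
        ultimately show "y \<in> B" using b by auto
      qed
      have rB': "r ` B = B" by (rule endo_inj_surj[OF finB rB]) (use injr in \<open>auto simp: inj_on_def\<close>)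
      have bA: "bij_betw r A A" using rA injr by (simp add: bij_betw_def inj_on_def inj_def)
      have bB: "bij_betw r B B" using rB' injr by (simp add: bij_betw_def inj_on_def inj_def)
      have pA: "restrict_id r A permutes A" by (rule permutes_restrict_id[OF bA])
      have pB: "restrict_id r B permutes B" by (rule permutes_restrict_id[OF bB])
      have "r = restrict_id r A \<circ> restrict_id r B"
      proof
        fix x show "r x = (restrict_id r A \<circ> restrict_id r B) x"
        proof (cases "x \<in> B")
          case True
          hence "r x \<in> B" using rB' by auto
          hence "r x \<notin> A" using disj by auto
          thus ?thesis using True by (simp add: restrict_id_def)
        next
          case False
          show ?thesis
          proof (cases "x \<in> A")
            case True thus ?thesis using False by (simp add: restrict_id_def)
          next
            case False': False
            hence "r x = x" using r(1) False permutes_not_in by (metis Un_iff)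
            thus ?thesis using False False' by (simp add: restrict_id_def)
          qed
        qed
      qed
      thus "r \<in> c ` ({p. p permutes A} \<times> {q. q permutes B})"
        using pA pB unfolding c_def by (intro image_eqI[where x="(restrict_id r A, restrict_id r B)"]) auto
    qed
  qed
  have "sum T R = sum (T \<circ> c) ({p. p permutes A} \<times> {q. q permutes B})"
    using sum.reindex[OF inj, of T] img by simp
  also have "\<dots> = (\<Sum>p\<in>{p. p permutes A}. \<Sum>q\<in>{q. q permutes B}. T (p \<circ> q))"
    by (subst sum.cartesian_product) (simp add: c_def case_prod_unfold)
  also have "\<dots> = (\<Sum>p\<in>{p. p permutes A}. \<Sum>q\<in>{q. q permutes B}.
        (of_int (sign p) * (\<Prod>v\<in>A. M v (p v))) * (of_int (sign q) * (\<Prod>v\<in>B. M v (q v))))"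
  proof (intro sum.cong refl)
    fix p q assume "p \<in> {p. p permutes A}" "q \<in> {q. q permutes B}"
    hence h: "p permutes A" "q permutes B" by auto
    have s: "sign (p \<circ> q) = sign p * sign q"
      by (rule sign_compose; rule permutes_imp_permutation) (use h finA finB in auto)
    have "(\<Prod>z\<in>A \<union> B. M z ((p \<circ> q) z)) = (\<Prod>z\<in>A. M z ((p \<circ> q) z)) * (\<Prod>z\<in>B. M z ((p \<circ> q) z))"
      by (rule prod.union_disjoint[OF finA finB disj])
    also have "(\<Prod>z\<in>A. M z ((p \<circ> q) z)) = (\<Prod>v\<in>A. M v (p v))"
    proof (intro prod.cong refl)
      fix z assume "z \<in> A"
      hence "q z = z" using h(2) disj permutes_not_in by fastforce
      thus "M z ((p \<circ> q) z) = M z (p z)" by simp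
    qed
    also have "(\<Prod>z\<in>B. M z ((p \<circ> q) z)) = (\<Prod>v\<in>B. M v (q v))"
    proof (intro prod.cong refl)
      fix z assume "z \<in> B"
      hence "q z \<in> B" using permutes_in_image[OF h(2)] by auto
      hence "q z \<notin> A" using disj by auto
      thus "M z ((p \<circ> q) z) = M z (q z)" using h(1) by (simp add: permutes_not_in)
    qed
    finally show "T (p \<circ> q) = (of_int (sign p) * (\<Prod>v\<in>A. M v (p v))) * (of_int (sign q) * (\<Prod>v\<in>B. M v (q v)))"
      unfolding T_def s by (simp add: algebra_simps)
  qed
  also have "\<dots> = det_on A M * det_on B M"
    unfolding det_on_def by (simp add: sum_product)
  finally show ?thesis using step1 by simp
qed

lemma det_on_row_linear:
  assumes fin: "finite V" and x: "x \<in> V"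
    and rx: "\<And>z. z \<in> V \<Longrightarrow> M x z = P x z + Q x z"
    and ro: "\<And>v z. v \<in> V \<Longrightarrow> z \<in> V \<Longrightarrow> v \<noteq> x \<Longrightarrow> M v z = P v z \<and> M v z = Q v z"
  shows "det_on V M = det_on V P + det_on V Q"
  unfolding det_on_def sum.distrib[symmetric]
proof (rule sum.cong[OF refl])
  fix p assume "p \<in> {p. p permutes V}"
  hence p: "p permutes V" by simp
  have pin: "p v \<in> V" if "v \<in> V" for v using permutes_in_image[OF p] that by simp
  have split: "\<And>F. (\<Prod>v\<in>V. F v) = F x * (\<Prod>v\<in>V - {x}. F v)"
    using prod.remove[OF fin x] by blast
  have roP: "M v z = P v z" and roQ: "M v z = Q v z" if "v \<in> V" "z \<in> V" "v \<noteq> x" for v z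
    using ro[OF that] by auto
  have "(\<Prod>v\<in>V - {x}. M v (p v)) = (\<Prod>v\<in>V - {x}. P v (p v))"
    using roP pin by (intro prod.cong) auto
  moreover have "(\<Prod>v\<in>V - {x}. M v (p v)) = (\<Prod>v\<in>V - {x}. Q v (p v))"
    using roQ pin by (intro prod.cong) auto
  ultimately show "of_int (sign p) * (\<Prod>v\<in>V. M v (p v)) =
      of_int (sign p) * (\<Prod>v\<in>V. P v (p v)) + of_int (sign p) * (\<Prod>v\<in>V. Q v (p v))"
    unfolding split[of "\<lambda>v. M v (p v)"] split[of "\<lambda>v. P v (p v)"] split[of "\<lambda>v. Q v (p v)"]
    using rx[OF pin[OF x]] by (simp add: algebra_simps)
qed

lemma det_on_row_swap:
  assumes fin: "finite V" and a: "a \<in> V" and b: "b \<in> V" and ab: "a \<noteq> b"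
  shows "det_on V (\<lambda>v z. M (Transposition.transpose a b v) z) = - det_on V M"
proof -
  let ?t = "Transposition.transpose a b"
  have tp: "?t permutes V" using a b by (simp add: permutes_swap_id)
  have tt: "?t \<circ> ?t = id" by (simp add: fun_eq_iff)
  have bij: "bij_betw (\<lambda>p. p \<circ> ?t) {p. p permutes V} {p. p permutes V}"
  proof (rule bij_betw_byWitness[where f'="\<lambda>p. p \<circ> ?t"])
    show "\<forall>p\<in>{p. p permutes V}. p \<circ> ?t \<circ> ?t = p" by (simp add: o_assoc[symmetric] tt)
    thus "\<forall>p\<in>{p. p permutes V}. p \<circ> ?t \<circ> ?t = p" .
    show "(\<lambda>p. p \<circ> ?t) ` {p. p permutes V} \<subseteq> {p. p permutes V}"
      using permutes_compose[OF tp] by auto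
    thus "(\<lambda>p. p \<circ> ?t) ` {p. p permutes V} \<subseteq> {p. p permutes V}" .
  qed
  have bt: "bij_betw ?t V V" using permutes_imp_bij[OF tp] .
  have "det_on V (\<lambda>v z. M (?t v) z) = (\<Sum>p\<in>{p. p permutes V}. of_int (sign p) * (\<Prod>v\<in>V. M v (p (?t v))))"
    unfolding det_on_def
  proof (rule sum.cong[OF refl])
    fix p assume "p \<in> {p. p permutes V}"
    have "(\<Prod>v\<in>V. M v (p (?t v))) = (\<Prod>v\<in>V. M (?t v) (p (?t (?t v))))"
      by (rule prod.reindex_bij_betw[OF bt, symmetric])
    also have "\<dots> = (\<Prod>v\<in>V. M (?t v) (p v))" by simp
    finally show "of_int (sign p) * (\<Prod>v\<in>V. M (?t v) (p v)) = of_int (sign p) * (\<Prod>v\<in>V. M v (p (?t v)))" by simp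
  qed
  also have "\<dots> = (\<Sum>p\<in>{p. p permutes V}. - (of_int (sign (p \<circ> ?t)) * (\<Prod>v\<in>V. M v ((p \<circ> ?t) v))))"
  proof (rule sum.cong[OF refl])
    fix p assume "p \<in> {p. p permutes V}"
    hence "sign (p \<circ> ?t) = sign p * sign ?t"
      by (intro sign_compose permutes_imp_permutation[OF fin]) (auto intro: tp)
    hence "sign (p \<circ> ?t) = - sign p" using ab by (simp add: sign_swap_id)
    thus "of_int (sign p) * (\<Prod>v\<in>V. M v (p (?t v))) = - (of_int (sign (p \<circ> ?t)) * (\<Prod>v\<in>V. M v ((p \<circ> ?t) v)))"
      by simp
  qed
  also have "\<dots> = - (\<Sum>p\<in>{p. p permutes V}. of_int (sign (p \<circ> ?t)) * (\<Prod>v\<in>V. M v ((p \<circ> ?t) v)))"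
    by (simp add: sum_negf)
  also have "(\<Sum>p\<in>{p. p permutes V}. of_int (sign (p \<circ> ?t)) * (\<Prod>v\<in>V. M v ((p \<circ> ?t) v))) = det_on V M"
    unfolding det_on_def by (rule sum.reindex_bij_betw[OF bij])
  finally show ?thesis .
qed

lemma det_on_row_diag:
  assumes fin: "finite V" and x: "x \<in> V" and z: "\<And>v. v \<in> V \<Longrightarrow> v \<noteq> x \<Longrightarrow> M x v = 0"
  shows "det_on V M = M x x * det_on (V - {x}) M"
proof -
  have "det_on ({x} \<union> (V - {x})) M = det_on {x} M * det_on (V - {x}) M"
    by (rule det_on_block) (use fin z in auto)
  moreover have "{x} \<union> (V - {x}) = V" using x by auto
  moreover have "det_on {x} M = M x x" by (subst det_on_diag) auto
  ultimately show ?thesis by simp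
qed

lemma det_on_row_single:
  assumes fin: "finite V" and u: "u \<in> V" and w: "w \<in> V" and uw: "u \<noteq> w"
    and row: "\<And>z. z \<in> V \<Longrightarrow> z \<noteq> u \<Longrightarrow> M w z = 0"
    and col: "\<And>v. v \<in> V \<Longrightarrow> v \<noteq> u \<Longrightarrow> v \<noteq> w \<Longrightarrow> M v w = 0"
  shows "det_on V M = - (M w u * M u w * det_on (V - {u, w}) M)"
proof -
  let ?t = "Transposition.transpose u w"
  define M3 where "M3 = (\<lambda>v z. M (?t v) z)"
  have 1: "det_on V M3 = - det_on V M" unfolding M3_def by (rule det_on_row_swap[OF fin u w uw])
  have 2: "det_on V M3 = M3 u u * det_on (V - {u}) M3"
    by (rule det_on_row_diag[OF fin u]) (use row in \<open>auto simp: M3_def\<close>)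
  have e: "(V - {u, w}) \<union> {w} = V - {u}" using w uw by auto
  have 3: "det_on ((V - {u, w}) \<union> {w}) M3 = det_on (V - {u, w}) M3 * det_on {w} M3"
    by (rule det_on_block) (use fin col in \<open>auto simp: M3_def\<close>)
  have 4: "det_on {w} M3 = M u w" by (subst det_on_diag) (auto simp: M3_def)
  have 5: "det_on (V - {u, w}) M3 = det_on (V - {u, w}) M"
    by (rule det_on_cong) (use fin in \<open>auto simp: M3_def Transposition.transpose_def\<close>)
  have "M3 u u = M w u" by (simp add: M3_def)
  thus ?thesis using 1 2 3 4 5 e by (simp add: algebra_simps)
qed

lemma verts_delete [simp]: "verts (delete_vertex G x) = verts G - {x}"
  by (simp add: delete_vertex_def verts_def)
lemma adj_delete [simp]: "adj (delete_vertex G x) u v = (adj G u v \<and> u \<noteq> x \<and> v \<noteq> x)"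
  by (simp add: delete_vertex_def adj_def)

lemma simple_delete: "simple_graph G \<Longrightarrow> simple_graph (delete_vertex G x)"
  by (auto simp: simple_graph_def)

lemma degree_delete:
  assumes "simple_graph G" "v \<noteq> x"
  shows "degree (delete_vertex G x) v = degree G v - (if adj G v x then 1 else 0)"
proof -
  have e: "{u \<in> verts (delete_vertex G x). adj (delete_vertex G x) v u} = {u \<in> verts G. adj G v u} - {x}"
    using assms by auto
  have f: "finite {u \<in> verts G. adj G v u}" using assms(1) by (auto simp: simple_graph_def)
  show ?thesis unfolding degree_def e
    using assms(1) by (auto simp: simple_graph_def card_Diff_singleton_if)
qed

lemma sg_sym: "simple_graph G \<Longrightarrow> adj G u v \<Longrightarrow> adj G v u"
  by (simp add: simple_graph_def)
lemma sg_irr: "simple_graph G \<Longrightarrow> \<not> adj G u u"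
  by (simp add: simple_graph_def)
lemma sg_in1: "simple_graph G \<Longrightarrow> adj G u v \<Longrightarrow> u \<in> verts G"
  by (simp add: simple_graph_def)
lemma sg_in2: "simple_graph G \<Longrightarrow> adj G u v \<Longrightarrow> v \<in> verts G"
  by (simp add: simple_graph_def)
lemma sg_fin: "simple_graph G \<Longrightarrow> finite (verts G)"
  by (simp add: simple_graph_def)

definition ihara_entry :: "'a graph \<Rightarrow> 'a \<Rightarrow> 'a \<Rightarrow> real poly" where
  "ihara_entry G u v = [: (if u = v then 1 else 0), - adj_matrix G u v,
              (if u = v then of_nat (degree G u) - 1 else 0) :]"

lemma ihara_poly_entry: "ihara_poly G = det_on (verts G) (ihara_entry G)"
  unfolding ihara_poly_def ihara_entry_def[abs_def] by (rule refl)

lemma ihara_leaf: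
  assumes G: "simple_graph G" and w: "w \<in> verts G" and d: "degree G w = 1"
  shows "ihara_poly G = ihara_poly (delete_vertex G w)"
proof -
  let ?V = "verts G"
  have fin: "finite ?V" using G by (simp add: simple_graph_def)
  have "card {z \<in> ?V. adj G w z} = 1" using d by (simp add: degree_def)
  then obtain u where uset: "{z \<in> ?V. adj G w z} = {u}" using card_1_singletonE by blast
  hence u: "u \<in> ?V" "adj G w u" and only: "\<And>z. z \<in> ?V \<Longrightarrow> adj G w z \<Longrightarrow> z = u" by auto
  have uw: "u \<noteq> w" using u(2) sg_irr[OF G, of w] by auto
  have adjuw: "adj G u w" using sg_sym[OF G u(2)] .
  have only': "z = u" if "adj G z w" for z
    using only[OF sg_in1[OF G that] sg_sym[OF G that]] .
  define M where "M = ihara_entry G"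
  define P where "P = (\<lambda>v z. if v = w then (if z = w then 1 else 0) else M v z)"
  define Q where "Q = (\<lambda>v z. if v = w then (if z = u then [:0, -1:] else 0) else M v z)"
  have lin: "det_on ?V M = det_on ?V P + det_on ?V Q"
  proof (rule det_on_row_linear[OF fin w])
    fix z assume "z \<in> ?V"
    show "M w z = P w z + Q w z"
    proof (cases "z = w")
      case True thus ?thesis using uw sg_irr[OF G, of w]
        by (simp add: M_def P_def Q_def ihara_entry_def adj_matrix_def d)
    next
      case False
      show ?thesis
      proof (cases "z = u")
        case True thus ?thesis using uw u(2) False
          by (simp add: M_def P_def Q_def ihara_entry_def adj_matrix_def)
      next
        case False': False
        hence "\<not> adj G w z" using only[OF \<open>z \<in> ?V\<close>] by blast
        thus ?thesis using False False'
          by (simp add: M_def P_def Q_def ihara_entry_def adj_matrix_def)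
      qed
    qed
  qed (auto simp: P_def Q_def)
  have dP: "det_on ?V P = det_on (?V - {w}) M"
  proof -
    have "det_on ?V P = P w w * det_on (?V - {w}) P"
      by (rule det_on_row_diag[OF fin w]) (auto simp: P_def)
    also have "det_on (?V - {w}) P = det_on (?V - {w}) M"
      by (rule det_on_cong) (use fin in \<open>auto simp: P_def\<close>)
    finally show ?thesis by (simp add: P_def)
  qed
  have dQ: "det_on ?V Q = - ([:0, 0, 1:] * det_on (?V - {u, w}) M)"
  proof -
    have "det_on ?V Q = - (Q w u * Q u w * det_on (?V - {u, w}) Q)"
    proof (rule det_on_row_single[OF fin u(1) w uw])
      fix v assume "v \<in> ?V" "v \<noteq> u" "v \<noteq> w"
      thus "Q v w = 0" using only'[of v]
        by (auto simp: Q_def M_def ihara_entry_def adj_matrix_def)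
    qed (auto simp: Q_def)
    also have "det_on (?V - {u, w}) Q = det_on (?V - {u, w}) M"
      by (rule det_on_cong) (use fin in \<open>auto simp: Q_def\<close>)
    also have "Q w u * Q u w = [:0, 0, 1:]"
      using uw adjuw by (simp add: Q_def M_def ihara_entry_def adj_matrix_def)
    finally show ?thesis .
  qed
  let ?H = "delete_vertex G w"
  have degH: "degree ?H v = degree G v - (if v = u then 1 else 0)" if "v \<noteq> w" for v
  proof -
    have "adj G v w \<longleftrightarrow> v = u" using only'[of v] adjuw by blast
    thus ?thesis using degree_delete[OF G that] by simp
  qed
  have du: "degree G u \<ge> 1"
  proof -
    have "w \<in> {z \<in> ?V. adj G u z}" using w adjuw by simp
    moreover have "finite {z \<in> ?V. adj G u z}" using fin by simp
    ultimately have "card {z \<in> ?V. adj G u z} \<noteq> 0" by auto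
    thus ?thesis unfolding degree_def by simp
  qed
  define N where "N = ihara_entry ?H"
  define Q' where "Q' = (\<lambda>v z. if v = u then (if z = u then [:0, 0, -1:] else 0) else M v z)"
  have fin': "finite (?V - {w})" using fin by simp
  have linN: "det_on (?V - {w}) N = det_on (?V - {w}) M + det_on (?V - {w}) Q'"
  proof (rule det_on_row_linear[OF fin'])
    show "u \<in> ?V - {w}" using u uw by simp
    fix z assume z: "z \<in> ?V - {w}"
    have dd: "real (degree ?H u) - 1 = real (degree G u) - 1 - 1"
      using degH[OF uw] du by (simp add: of_nat_diff)
    show "N u z = M u z + Q' u z"
    proof (cases "z = u")
      case True thus ?thesis using dd uw
        by (simp add: N_def M_def Q'_def ihara_entry_def adj_matrix_def)
    next
      case False thus ?thesis using z uw
        by (simp add: N_def M_def Q'_def ihara_entry_def adj_matrix_def)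
    qed
  next
    fix v z assume vz: "v \<in> ?V - {w}" "z \<in> ?V - {w}" "v \<noteq> u"
    have "degree ?H v = degree G v" using degH[of v] vz by simp
    thus "N v z = M v z \<and> N v z = Q' v z"
      using vz by (cases "v = z") (simp_all add: N_def M_def Q'_def ihara_entry_def adj_matrix_def)
  qed
  have dQ': "det_on (?V - {w}) Q' = - ([:0, 0, 1:] * det_on (?V - {u, w}) M)"
  proof -
    have "det_on (?V - {w}) Q' = Q' u u * det_on (?V - {w} - {u}) Q'"
      by (rule det_on_row_diag[OF fin']) (use u uw in \<open>auto simp: Q'_def\<close>)
    also have "?V - {w} - {u} = ?V - {u, w}" by auto
    also have "det_on (?V - {u, w}) Q' = det_on (?V - {u, w}) M"
      by (rule det_on_cong) (use fin in \<open>auto simp: Q'_def\<close>)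
    finally show ?thesis by (simp add: Q'_def)
  qed
  have "ihara_poly G = det_on ?V M" by (simp add: ihara_poly_entry M_def)
  also have "\<dots> = det_on (?V - {w}) N" using lin dP dQ linN dQ' by simp
  also have "\<dots> = ihara_poly ?H" by (simp add: ihara_poly_entry N_def)
  finally show ?thesis .
qed

lemma ihara_isolated:
  assumes G: "simple_graph G" and w: "w \<in> verts G" and d: "degree G w = 0"
  shows "ihara_poly G = [:1, 0, -1:] * ihara_poly (delete_vertex G w)"
proof -
  let ?V = "verts G"
  have fin: "finite ?V" using G by (simp add: simple_graph_def)
  have none: "\<not> adj G w z" for z
  proof
    assume "adj G w z"
    hence "z \<in> {z \<in> ?V. adj G w z}" using sg_in2[OF G] by auto
    moreover have "finite {z \<in> ?V. adj G w z}" using fin by auto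
    ultimately show False using d unfolding degree_def by auto
  qed
  have none': "\<not> adj G z w" for z using none sg_sym[OF G] by blast
  have "ihara_poly G = ihara_entry G w w * det_on (?V - {w}) (ihara_entry G)"
    unfolding ihara_poly_entry
    by (rule det_on_row_diag[OF fin w]) (auto simp: ihara_entry_def adj_matrix_def none)
  also have "ihara_entry G w w = [:1, 0, -1:]" by (simp add: ihara_entry_def adj_matrix_def d none)
  also have "det_on (?V - {w}) (ihara_entry G) = ihara_poly (delete_vertex G w)"
    unfolding ihara_poly_entry verts_delete
  proof (rule det_on_cong)
    fix a b assume ab: "a \<in> ?V - {w}" "b \<in> ?V - {w}"
    have "degree (delete_vertex G w) a = degree G a" using degree_delete[OF G, of a w] ab none' by simp
    thus "ihara_entry G a b = ihara_entry (delete_vertex G w) a b"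
      using ab by (cases "a = b") (simp_all add: ihara_entry_def adj_matrix_def)
  qed (use fin in auto)
  finally show ?thesis .
qed

lemma coeff_mult_top:
  fixes p q :: "'a::comm_ring_1 poly"
  assumes "Polynomial.degree p \<le> m" "Polynomial.degree q \<le> n"
  shows "coeff (p * q) (m + n) = coeff p m * coeff q n"
proof -
  have z: "coeff p i * coeff q (m + n - i) = 0" if "i \<le> m + n" "i \<noteq> m" for i
  proof (cases "i < m")
    case True
    hence "m + n - i > n" by simp
    hence "coeff q (m + n - i) = 0" using assms(2) by (intro coeff_eq_0) simp
    thus ?thesis by simp
  next
    case False
    hence "i > m" using that by simp
    hence "coeff p i = 0" using assms(1) by (intro coeff_eq_0) simp
    thus ?thesis by simp
  qed
  have "coeff (p * q) (m + n) = (\<Sum>i\<le>m + n. coeff p i * coeff q (m + n - i))" by (rule coeff_mult)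
  also have "\<dots> = coeff p m * coeff q (m + n - m) + (\<Sum>i\<in>{..m + n} - {m}. coeff p i * coeff q (m + n - i))"
    by (subst sum.remove[of _ m]) auto
  also have "(\<Sum>i\<in>{..m + n} - {m}. coeff p i * coeff q (m + n - i)) = 0"
    using z by (intro sum.neutral) auto
  finally show ?thesis by simp
qed

lemma coeff_prod_top:
  fixes f :: "'b \<Rightarrow> 'a::comm_ring_1 poly"
  assumes "finite V" "\<And>v. v \<in> V \<Longrightarrow> Polynomial.degree (f v) \<le> k"
  shows "coeff (\<Prod>v\<in>V. f v) (k * card V) = (\<Prod>v\<in>V. coeff (f v) k)"
  using assms
proof (induction V rule: finite_induct)
  case empty thus ?case by simp
next
  case (insert x F)
  have dF: "Polynomial.degree (\<Prod>v\<in>F. f v) \<le> k * card F"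
  proof -
    have "Polynomial.degree (\<Prod>v\<in>F. f v) \<le> sum (Polynomial.degree \<circ> f) F" by (rule degree_prod_sum_le[OF insert(1)])
    also have "\<dots> \<le> sum (\<lambda>_. k) F" using insert(4) by (intro sum_mono) auto
    finally show ?thesis by (simp add: mult.commute)
  qed
  have "coeff (\<Prod>v\<in>insert x F. f v) (k * card (insert x F)) = coeff (f x * (\<Prod>v\<in>F. f v)) (k + k * card F)"
    using insert by simp
  also have "\<dots> = coeff (f x) k * coeff (\<Prod>v\<in>F. f v) (k * card F)"
    by (rule coeff_mult_top[OF _ dF]) (use insert in auto)
  also have "\<dots> = (\<Prod>v\<in>insert x F. coeff (f v) k)" using insert by simp
  finally show ?case .
qed

lemma degree_prod_le_sum:
  fixes f :: "'b \<Rightarrow> 'a::comm_ring_1 poly"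
  assumes "finite V" "\<And>v. v \<in> V \<Longrightarrow> Polynomial.degree (f v) \<le> g v"
  shows "Polynomial.degree (\<Prod>v\<in>V. f v) \<le> sum g V"
proof -
  have "Polynomial.degree (\<Prod>v\<in>V. f v) \<le> sum (Polynomial.degree \<circ> f) V" by (rule degree_prod_sum_le[OF assms(1)])
  also have "\<dots> \<le> sum g V" using assms(2) by (intro sum_mono) auto
  finally show ?thesis .
qed

definition moved :: "('a \<Rightarrow> 'a) \<Rightarrow> 'a set \<Rightarrow> 'a set" where
  "moved p V = {v \<in> V. p v \<noteq> v}"

lemma moved_card_ge2:
  assumes "p permutes V" "finite V" "p \<noteq> id"
  shows "card (moved p V) \<ge> 2"
proof -
  obtain v where v: "p v \<noteq> v" using assms(3) by (auto simp: fun_eq_iff)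
  hence vV: "v \<in> V" using assms(1) permutes_not_in by metis
  have "p (p v) \<noteq> p v" using v permutes_inj[OF assms(1)] by (auto simp: inj_def)
  moreover have "p v \<in> V" using permutes_in_image[OF assms(1)] vV by simp
  ultimately have "{v, p v} \<subseteq> moved p V" using v vV by (auto simp: moved_def)
  moreover have "finite (moved p V)" using assms(2) by (simp add: moved_def)
  ultimately have "card {v, p v} \<le> card (moved p V)" by (rule card_mono[rotated])
  thus ?thesis using v by simp
qed

lemma moved_two:
  assumes p: "p permutes V" and m: "moved p V = {a, b}" and ab: "a \<noteq> b"
  shows "p = Transposition.transpose a b"
proof -
  have inj: "inj p" using permutes_inj[OF p] .
  have aV: "a \<in> V" "b \<in> V" "p a \<noteq> a" "p b \<noteq> b" using m by (auto simp: moved_def set_eq_iff)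
  have mv: "p x \<in> {a, b}" if "x \<in> {a, b}" for x
  proof -
    have "x \<in> V" "p x \<noteq> x" using that aV by auto
    hence "p x \<in> V" "p (p x) \<noteq> p x" using permutes_in_image[OF p] inj by (auto simp: inj_def)
    hence "p x \<in> moved p V" by (simp add: moved_def)
    thus ?thesis using m by simp
  qed
  have pa: "p a = b" using mv[of a] aV by auto
  have pb: "p b = a" using mv[of b] aV by auto
  show ?thesis
  proof
    fix x show "p x = Transposition.transpose a b x"
    proof (cases "x \<in> {a, b}")
      case True thus ?thesis using pa pb by auto
    next
      case False
      hence "x \<notin> moved p V" using m by simp
      hence "p x = x" using p permutes_not_in by (auto simp: moved_def)
      thus ?thesis using False by (auto simp: Transposition.transpose_def)
    qed
  qed
qed

lemma prod_fixed_moved: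
  assumes "finite V"
  shows "(\<Prod>v\<in>V. f v) = (\<Prod>v\<in>V - moved p V. f v) * (\<Prod>v\<in>moved p V. f v)"
proof -
  have "moved p V \<subseteq> V" by (auto simp: moved_def)
  thus ?thesis using prod.subset_diff[of "moved p V" V f] assms by (simp add: mult.commute)
qed

lemma card_fixed: "finite V \<Longrightarrow> card (V - moved p V) = card V - card (moved p V)"
  by (rule card_Diff_subset) (auto simp: moved_def)

lemma coeff_of_int_mult: "coeff (of_int k * q) n = of_int k * coeff q n"
  by (simp add: of_int_poly)

lemma degree_of_int_mult: "Polynomial.degree (of_int k * (q :: 'a::{comm_ring_1,ring_no_zero_divisors} poly)) \<le> Polynomial.degree q"
  by (simp add: of_int_poly degree_smult_le)

lemma sum_indicator_card:
  assumes "finite V"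
  shows "(\<Sum>v\<in>V. (if P v then (1::nat) else 0)) = card {v \<in> V. P v}"
  using assms by (simp add: sum.If_cases Int_def)

lemma det_top2:
  fixes M :: "'b \<Rightarrow> 'b \<Rightarrow> 'a::{comm_ring_1,ring_no_zero_divisors} poly"
  assumes fin: "finite V" and dd: "\<And>v. v \<in> V \<Longrightarrow> Polynomial.degree (M v v) \<le> 2"
    and od: "\<And>u v. u \<in> V \<Longrightarrow> v \<in> V \<Longrightarrow> u \<noteq> v \<Longrightarrow> Polynomial.degree (M u v) \<le> 1"
  shows "coeff (det_on V M) (2 * card V) = (\<Prod>v\<in>V. coeff (M v v) 2)"
proof -
  let ?T = "\<lambda>p. of_int (sign p) * (\<Prod>v\<in>V. M v (p v))"
  have finP: "finite {p. p permutes V}" using fin finite_permutations by blast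
  have z: "coeff (?T p) (2 * card V) = 0" if "p \<in> {p. p permutes V} - {id}" for p
  proof -
    have p: "p permutes V" "p \<noteq> id" using that by auto
    obtain v where v: "p v \<noteq> v" using p(2) by (auto simp: fun_eq_iff)
    hence vV: "v \<in> V" using p(1) permutes_not_in by metis
    define g where "g = (\<lambda>u. if p u = u then 2 else (1::nat))"
    have "Polynomial.degree (\<Prod>u\<in>V. M u (p u)) \<le> sum g V"
    proof (rule degree_prod_le_sum[OF fin])
      fix u assume "u \<in> V"
      thus "Polynomial.degree (M u (p u)) \<le> g u"
        using dd od permutes_in_image[OF p(1)] by (auto simp: g_def)
    qed
    also have "sum g V < sum (\<lambda>_. 2) V"
      by (rule sum_strict_mono_ex1[OF fin]) (use vV v in \<open>auto simp: g_def\<close>)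
    also have "sum (\<lambda>_. (2::nat)) V = 2 * card V" by simp
    finally have "Polynomial.degree (?T p) < 2 * card V"
      using degree_of_int_mult[of "sign p" "\<Prod>u\<in>V. M u (p u)"] by linarith
    thus ?thesis by (intro coeff_eq_0) simp
  qed
  have "coeff (det_on V M) (2 * card V) = (\<Sum>p\<in>{p. p permutes V}. coeff (?T p) (2 * card V))"
    unfolding det_on_def by (simp add: coeff_sum)
  also have "\<dots> = coeff (?T id) (2 * card V) + (\<Sum>p\<in>{p. p permutes V} - {id}. coeff (?T p) (2 * card V))"
    by (subst sum.remove[OF finP, of id]) (auto simp: permutes_id)
  also have "(\<Sum>p\<in>{p. p permutes V} - {id}. coeff (?T p) (2 * card V)) = 0"
    using z by (intro sum.neutral) blast
  also have "coeff (?T id) (2 * card V) = (\<Prod>v\<in>V. coeff (M v v) 2)"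
    using coeff_prod_top[OF fin, of "\<lambda>v. M v v" 2] dd by simp
  finally show ?thesis by simp
qed

lemma ihara_top:
  assumes G: "simple_graph G"
  shows "coeff (ihara_poly G) (2 * card (verts G)) = (\<Prod>v\<in>verts G. real (degree G v) - 1)"
proof -
  have "coeff (ihara_poly G) (2 * card (verts G)) = (\<Prod>v\<in>verts G. coeff (ihara_entry G v v) 2)"
    unfolding ihara_poly_entry
  proof (rule det_top2)
    show "finite (verts G)" using sg_fin[OF G] .
    fix v :: 'a show "Polynomial.degree (ihara_entry G v v) \<le> 2"
      by (simp add: ihara_entry_def degree_pCons_le)
  next
    fix u v :: 'a assume "u \<noteq> v"
    thus "Polynomial.degree (ihara_entry G u v) \<le> 1"
      by (simp add: ihara_entry_def degree_pCons_le)
  qed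
  also have "\<dots> = (\<Prod>v\<in>verts G. real (degree G v) - 1)"
    by (simp add: ihara_entry_def numeral_2_eq_2)
  finally show ?thesis .
qed

lemma ihara_const:
  assumes G: "simple_graph G"
  shows "coeff (ihara_poly G) 0 = 1"
proof -
  have "coeff (ihara_poly G) 0 = poly (ihara_poly G) 0" by (simp add: poly_0_coeff_0)
  also have "\<dots> = det_on (verts G) (\<lambda>u v. poly (ihara_entry G u v) 0)"
    unfolding ihara_poly_entry det_on_def by (simp add: poly_sum poly_prod)
  also have "\<dots> = (\<Prod>v\<in>verts G. poly (ihara_entry G v v) 0)"
    by (rule det_on_diag[OF sg_fin[OF G]]) (simp add: ihara_entry_def)
  also have "\<dots> = 1" by (simp add: ihara_entry_def)
  finally show ?thesis .
qed

section \<open>Characteristic polynomial\<close>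

definition char_entry :: "'a graph \<Rightarrow> 'a \<Rightarrow> 'a \<Rightarrow> complex poly" where
  "char_entry G u v = (if u = v then [:0, 1:] else 0) - [:adj_matrix G u v:]"

lemma char_poly_entry: "char_poly G = det_on (verts G) (char_entry G)"
  unfolding char_poly_def char_entry_def[abs_def] by (rule refl)

lemma char_entry_diag: "simple_graph G \<Longrightarrow> char_entry G v v = [:0, 1:]"
  by (simp add: char_entry_def adj_matrix_def sg_irr)

lemma char_term_degree:
  assumes G: "simple_graph G" and p: "p permutes verts G"
  shows "Polynomial.degree (\<Prod>v\<in>verts G. char_entry G v (p v)) \<le> card (verts G - moved p (verts G))"
proof -
  let ?V = "verts G"
  have fin: "finite ?V" using sg_fin[OF G] .
  have "Polynomial.degree (\<Prod>v\<in>?V. char_entry G v (p v)) \<le> (\<Sum>v\<in>?V. if p v = v then 1 else 0)"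
  proof (rule degree_prod_le_sum[OF fin])
    fix v assume "v \<in> ?V"
    show "Polynomial.degree (char_entry G v (p v)) \<le> (if p v = v then 1 else 0)"
      using char_entry_diag[OF G, of v] by (auto simp: char_entry_def)
  qed
  also have "\<dots> = card {v \<in> ?V. p v = v}" by (rule sum_indicator_card[OF fin])
  also have "{v \<in> ?V. p v = v} = ?V - moved p ?V" by (auto simp: moved_def)
  finally show ?thesis .
qed

lemma char_poly_degree_coeff:
  assumes G: "simple_graph G"
  shows "Polynomial.degree (char_poly G) \<le> card (verts G)" "coeff (char_poly G) (card (verts G)) = 1"
proof -
  let ?V = "verts G"
  let ?T = "\<lambda>p. of_int (sign p) * (\<Prod>v\<in>?V. char_entry G v (p v))"
  have fin: "finite ?V" using sg_fin[OF G] .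
  have finP: "finite {p. p permutes ?V}" using fin finite_permutations by blast
  have dT: "Polynomial.degree (?T p) \<le> card ?V - card (moved p ?V)" if "p permutes ?V" for p
    using char_term_degree[OF G that] degree_of_int_mult[of "sign p" "\<Prod>v\<in>?V. char_entry G v (p v)"]
      card_fixed[OF fin, of p] by linarith
  show "Polynomial.degree (char_poly G) \<le> card ?V"
    unfolding char_poly_entry det_on_def
    by (rule degree_sum_le[OF finP]) (use dT in fastforce)
  have z: "coeff (?T p) (card ?V) = 0" if "p \<in> {p. p permutes ?V} - {id}" for p
  proof -
    have p: "p permutes ?V" "p \<noteq> id" using that by auto
    have "card (moved p ?V) \<ge> 2" by (rule moved_card_ge2[OF p(1) fin p(2)])
    moreover have "card (moved p ?V) \<le> card ?V" by (rule card_mono[OF fin]) (auto simp: moved_def)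
    ultimately have "Polynomial.degree (?T p) < card ?V" using dT[OF p(1)] by linarith
    thus ?thesis by (intro coeff_eq_0) simp
  qed
  have "coeff (char_poly G) (card ?V) = (\<Sum>p\<in>{p. p permutes ?V}. coeff (?T p) (card ?V))"
    unfolding char_poly_entry det_on_def by (simp add: coeff_sum)
  also have "\<dots> = coeff (?T id) (card ?V) + (\<Sum>p\<in>{p. p permutes ?V} - {id}. coeff (?T p) (card ?V))"
    by (subst sum.remove[OF finP, of id]) (auto simp: permutes_id)
  also have "(\<Sum>p\<in>{p. p permutes ?V} - {id}. coeff (?T p) (card ?V)) = 0"
    using z by (intro sum.neutral) blast
  also have "coeff (?T id) (card ?V) = 1"
    using coeff_prod_top[OF fin, of "\<lambda>v. char_entry G v v" 1] by (simp add: char_entry_diag[OF G])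
  finally show "coeff (char_poly G) (card ?V) = 1" by simp
qed

lemma lead_coeff_char_poly:
  assumes G: "simple_graph G"
  shows "lead_coeff (char_poly G) = 1"
proof -
  have "Polynomial.degree (char_poly G) = card (verts G)"
    using char_poly_degree_coeff[OF G] by (metis coeff_eq_0 le_antisym not_le one_neq_zero le_degree)
  thus ?thesis using char_poly_degree_coeff(2)[OF G] by simp
qed

lemma char_poly_eq_of_spectrum:
  assumes "simple_graph G" "simple_graph H" "adj_spectrum G = adj_spectrum H"
  shows "char_poly G = char_poly H"
proof -
  have "char_poly G = smult (lead_coeff (char_poly G)) (\<Prod>x\<in>#proots (char_poly G). [:-x, 1:])"
    by (rule complex_poly_decompose_multiset[symmetric])
  also have "\<dots> = smult (lead_coeff (char_poly H)) (\<Prod>x\<in>#proots (char_poly H). [:-x, 1:])"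
    using assms lead_coeff_char_poly[OF assms(1)] lead_coeff_char_poly[OF assms(2)] by (simp add: adj_spectrum_def)
  also have "\<dots> = char_poly H" by (rule complex_poly_decompose_multiset)
  finally show ?thesis .
qed

lemma edge_doubleton_iff:
  assumes G: "simple_graph G"
  shows "{a, b} \<in> {{u, v} | u v. adj G u v} \<longleftrightarrow> adj G a b"
proof
  assume "{a, b} \<in> {{u, v} | u v. adj G u v}"
  then obtain u v where "{a, b} = {u, v}" "adj G u v" by blast
  thus "adj G a b" using sg_sym[OF G] by (auto simp: doubleton_eq_iff)
qed blast

lemma moved_transpose:
  assumes "a \<in> V" "b \<in> V" "a \<noteq> b"
  shows "moved (Transposition.transpose a b) V = {a, b}"
  using assms by (auto simp: moved_def Transposition.transpose_def)

lemma char_poly_coeff_edges: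
  assumes G: "simple_graph G" and N2: "card (verts G) \<ge> 2"
  shows "coeff (char_poly G) (card (verts G) - 2) = - of_nat (num_edges G)"
proof -
  let ?V = "verts G"
  let ?N = "card ?V"
  let ?E = "{{u, v} | u v. adj G u v}"
  let ?T = "\<lambda>p. of_int (sign p) * (\<Prod>v\<in>?V. char_entry G v (p v))"
  let ?c = "\<lambda>p. coeff (?T p) (?N - 2)"
  define T2 where "T2 = {p. p permutes ?V \<and> card (moved p ?V) = 2}"
  have fin: "finite ?V" using sg_fin[OF G] .
  have finP: "finite {p. p permutes ?V}" using fin finite_permutations by blast
  have dT: "Polynomial.degree (?T p) \<le> ?N - card (moved p ?V)" if "p permutes ?V" for p
    using char_term_degree[OF G that] degree_of_int_mult[of "sign p" "\<Prod>v\<in>?V. char_entry G v (p v)"]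
      card_fixed[OF fin, of p] by linarith
  have step1: "(\<Sum>p\<in>{p. p permutes ?V}. ?c p) = (\<Sum>p\<in>T2. ?c p)"
  proof (rule sum.mono_neutral_right[OF finP])
    show "T2 \<subseteq> {p. p permutes ?V}" by (auto simp: T2_def)
    show "\<forall>p\<in>{p. p permutes ?V} - T2. ?c p = 0"
    proof
      fix p assume "p \<in> {p. p permutes ?V} - T2"
      hence p: "p permutes ?V" "card (moved p ?V) \<noteq> 2" by (auto simp: T2_def)
      show "?c p = 0"
      proof (cases "p = id")
        case True
        have "(\<Prod>v\<in>?V. char_entry G v (p v)) = [:0, 1:] ^ ?N"
          using True by (simp add: char_entry_diag[OF G])
        also have "\<dots> = monom 1 ?N" by (simp add: monom_altdef)
        finally show ?thesis using True N2 by simp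
      next
        case False
        have "card (moved p ?V) \<ge> 2" by (rule moved_card_ge2[OF p(1) fin False])
        hence "card (moved p ?V) \<ge> 3" using p(2) by linarith
        moreover have "card (moved p ?V) \<le> ?N" by (rule card_mono[OF fin]) (auto simp: moved_def)
        ultimately have "Polynomial.degree (?T p) < ?N - 2" using dT[OF p(1)] N2 by linarith
        thus ?thesis by (intro coeff_eq_0) simp
      qed
    qed
  qed
  have cT2: "?c p = - (if moved p ?V \<in> ?E then 1 else 0)" if "p \<in> T2" for p
  proof -
    have p: "p permutes ?V" "card (moved p ?V) = 2" using that by (auto simp: T2_def)
    then obtain a b where ab: "moved p ?V = {a, b}" "a \<noteq> b" by (auto simp: card_2_iff)
    have abV: "a \<in> ?V" "b \<in> ?V" using ab by (auto simp: moved_def set_eq_iff)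
    have pt: "p = Transposition.transpose a b" by (rule moved_two[OF p(1) ab])
    have sg: "sign p = -1" using pt ab by (simp add: sign_swap_id)
    have cm: "card (?V - moved p ?V) = ?N - 2" using card_fixed[OF fin, of p] p(2) by simp
    have "(\<Prod>v\<in>?V. char_entry G v (p v)) = (\<Prod>v\<in>?V - moved p ?V. char_entry G v (p v)) * (\<Prod>v\<in>moved p ?V. char_entry G v (p v))"
      by (rule prod_fixed_moved[OF fin])
    also have "(\<Prod>v\<in>?V - moved p ?V. char_entry G v (p v)) = (\<Prod>v\<in>?V - moved p ?V. [:0, 1:])"
      by (intro prod.cong refl) (auto simp: moved_def char_entry_diag[OF G])
    also have "\<dots> = monom 1 (?N - 2)" using cm by (simp add: monom_altdef)
    also have "(\<Prod>v\<in>moved p ?V. char_entry G v (p v)) = char_entry G a b * char_entry G b a"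
      using ab pt by simp
    also have "char_entry G a b * char_entry G b a = [:adj_matrix G a b:]"
      using ab(2) sg_sym[OF G, of a b] sg_sym[OF G, of b a] by (auto simp: char_entry_def adj_matrix_def)
    finally have "?c p = - adj_matrix G a b" using sg by (simp add: coeff_monom_mult)
    also have "adj_matrix G a b = (if moved p ?V \<in> ?E then 1 else 0)"
      using ab edge_doubleton_iff[OF G, of a b] by (simp add: adj_matrix_def)
    finally show ?thesis .
  qed
  have step2: "(\<Sum>p\<in>T2. ?c p) = - of_nat (card {p \<in> T2. moved p ?V \<in> ?E})"
  proof -
    have "(\<Sum>p\<in>T2. ?c p) = (\<Sum>p\<in>T2. - (if moved p ?V \<in> ?E then 1 else 0))"
      using cT2 by (intro sum.cong) auto
    also have "\<dots> = - of_nat (card {p \<in> T2. moved p ?V \<in> ?E})"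
      using finP by (simp add: sum_negf sum.If_cases T2_def Int_def)
    finally show ?thesis .
  qed
  have bij: "bij_betw (\<lambda>p. moved p ?V) {p \<in> T2. moved p ?V \<in> ?E} ?E"
  proof (rule bij_betw_imageI)
    show "inj_on (\<lambda>p. moved p ?V) {p \<in> T2. moved p ?V \<in> ?E}"
    proof (rule inj_onI)
      fix p q assume pq: "p \<in> {p \<in> T2. moved p ?V \<in> ?E}" "q \<in> {p \<in> T2. moved p ?V \<in> ?E}" "moved p ?V = moved q ?V"
      from pq obtain a b where ab: "moved p ?V = {a, b}" "a \<noteq> b" by (auto simp: T2_def card_2_iff)
      have "p = Transposition.transpose a b" by (rule moved_two[OF _ ab]) (use pq in \<open>auto simp: T2_def\<close>)
      moreover have "q = Transposition.transpose a b" by (rule moved_two[OF _ _ ab(2)]) (use pq ab in \<open>auto simp: T2_def\<close>)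
      ultimately show "p = q" by simp
    qed
    show "(\<lambda>p. moved p ?V) ` {p \<in> T2. moved p ?V \<in> ?E} = ?E"
    proof
      show "(\<lambda>p. moved p ?V) ` {p \<in> T2. moved p ?V \<in> ?E} \<subseteq> ?E" by blast
      show "?E \<subseteq> (\<lambda>p. moved p ?V) ` {p \<in> T2. moved p ?V \<in> ?E}"
      proof
        fix e assume "e \<in> ?E"
        then obtain u v where e: "e = {u, v}" "adj G u v" by blast
        have uv: "u \<in> ?V" "v \<in> ?V" "u \<noteq> v" using e sg_in1[OF G] sg_in2[OF G] sg_irr[OF G] by metis+
        have m: "moved (Transposition.transpose u v) ?V = {u, v}" by (rule moved_transpose[OF uv])
        have "Transposition.transpose u v \<in> T2"
          using m uv by (simp add: T2_def permutes_swap_id)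
        thus "e \<in> (\<lambda>p. moved p ?V) ` {p \<in> T2. moved p ?V \<in> ?E}"
          using m e \<open>e \<in> ?E\<close> by (intro image_eqI[where x="Transposition.transpose u v"]) auto
      qed
    qed
  qed
  have "coeff (char_poly G) (?N - 2) = (\<Sum>p\<in>{p. p permutes ?V}. ?c p)"
    unfolding char_poly_entry det_on_def by (simp add: coeff_sum)
  also have "\<dots> = - of_nat (card {p \<in> T2. moved p ?V \<in> ?E})" using step1 step2 by simp
  also have "card {p \<in> T2. moved p ?V \<in> ?E} = card ?E" by (rule bij_betw_same_card[OF bij])
  finally show ?thesis by (simp add: num_edges_def)
qed

lemma num_edges_eq_char:
  assumes "simple_graph G" "simple_graph H" "char_poly G = char_poly H"
    "card (verts G) = card (verts H)" "card (verts G) \<ge> 2"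
  shows "num_edges G = num_edges H"
  using char_poly_coeff_edges[OF assms(1,5)] char_poly_coeff_edges[OF assms(2)] assms(3-5) by simp

section \<open>Coalescence\<close>

lemma verts_coal [simp]: "verts (coalescence G x \<Gamma> y) = Inl ` verts G \<union> Inr ` (verts \<Gamma> - {y})"
  by (simp add: coalescence_def verts_def)
lemma adj_coal_ll [simp]: "adj (coalescence G x \<Gamma> y) (Inl u) (Inl v) = adj G u v"
  by (simp add: coalescence_def adj_def)
lemma adj_coal_rr [simp]: "adj (coalescence G x \<Gamma> y) (Inr u) (Inr v) = (u \<noteq> y \<and> v \<noteq> y \<and> adj \<Gamma> u v)"
  by (simp add: coalescence_def adj_def)
lemma adj_coal_lr [simp]: "adj (coalescence G x \<Gamma> y) (Inl u) (Inr w) = (u = x \<and> w \<noteq> y \<and> adj \<Gamma> y w)"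
  by (simp add: coalescence_def adj_def)
lemma adj_coal_rl [simp]: "adj (coalescence G x \<Gamma> y) (Inr w) (Inl u) = (u = x \<and> w \<noteq> y \<and> adj \<Gamma> w y)"
  by (simp add: coalescence_def adj_def)

lemma simple_coal:
  assumes G: "simple_graph G" and \<Gamma>: "simple_graph \<Gamma>" and x: "x \<in> verts G"
  shows "simple_graph (coalescence G x \<Gamma> y)"
  unfolding simple_graph_def
proof (intro conjI allI impI)
  show "finite (verts (coalescence G x \<Gamma> y))" using sg_fin[OF G] sg_fin[OF \<Gamma>] by simp
  fix p q assume a: "adj (coalescence G x \<Gamma> y) p q"
  show "p \<in> verts (coalescence G x \<Gamma> y)"
    using a x sg_in1[OF G] sg_in1[OF \<Gamma>] by (cases p; cases q) auto
  show "q \<in> verts (coalescence G x \<Gamma> y)"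
    using a x sg_in2[OF G] sg_in2[OF \<Gamma>] by (cases p; cases q) auto
  show "adj (coalescence G x \<Gamma> y) q p"
    using a sg_sym[OF G] sg_sym[OF \<Gamma>] by (cases p; cases q) auto
next
  fix p show "\<not> adj (coalescence G x \<Gamma> y) p p"
    using sg_irr[OF G] sg_irr[OF \<Gamma>] by (cases p) auto
qed

lemma card_coal:
  assumes G: "simple_graph G" and \<Gamma>: "simple_graph \<Gamma>" and y: "y \<in> verts \<Gamma>"
  shows "card (verts (coalescence G x \<Gamma> y)) = card (verts G) + (card (verts \<Gamma>) - 1)"
proof -
  have "card (Inl ` verts G \<union> Inr ` (verts \<Gamma> - {y}) :: ('a + 'b) set) =
      card (Inl ` verts G :: ('a + 'b) set) + card (Inr ` (verts \<Gamma> - {y}) :: ('a + 'b) set)"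
    by (rule card_Un_disjoint) (use sg_fin[OF G] sg_fin[OF \<Gamma>] in auto)
  also have "\<dots> = card (verts G) + card (verts \<Gamma> - {y})"
    by (simp add: card_image)
  finally show ?thesis using y sg_fin[OF \<Gamma>] by simp
qed

lemma char_entry_delete: "u \<noteq> y \<Longrightarrow> v \<noteq> y \<Longrightarrow> char_entry (delete_vertex G y) u v = char_entry G u v"
  by (simp add: char_entry_def adj_matrix_def)

lemma char_poly_coal:
  assumes G: "simple_graph G" and \<Gamma>: "simple_graph \<Gamma>" and x: "x \<in> verts G" and y: "y \<in> verts \<Gamma>"
  shows "char_poly (coalescence G x \<Gamma> y) =
    char_poly G * char_poly (delete_vertex \<Gamma> y) +
    char_poly (delete_vertex G x) * (char_poly \<Gamma> - [:0, 1:] * char_poly (delete_vertex \<Gamma> y))"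
proof -
  let ?H = "coalescence G x \<Gamma> y"
  let ?C = "char_entry ?H"
  let ?A1 = "Inl ` verts G :: ('a + 'b) set"
  let ?B1 = "Inr ` (verts \<Gamma> - {y}) :: ('a + 'b) set"
  have finG: "finite (verts G)" using sg_fin[OF G] .
  have fin\<Gamma>: "finite (verts \<Gamma>)" using sg_fin[OF \<Gamma>] .
  have finW: "finite (verts ?H)" using finG fin\<Gamma> by simp
  define M1 where "M1 = (\<lambda>v z. if v = Inl x then (if isl z then ?C v z else 0) else ?C v z)"
  define M2 where "M2 = (\<lambda>v z. if v = Inl x then (if isl z then 0 else ?C v z) else ?C v z)"
  have lin: "det_on (verts ?H) ?C = det_on (verts ?H) M1 + det_on (verts ?H) M2"
    by (rule det_on_row_linear[OF finW, of "Inl x"]) (use x in \<open>auto simp: M1_def M2_def\<close>)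
  have d1: "det_on (verts ?H) M1 = det_on ?A1 M1 * det_on ?B1 M1"
    unfolding verts_coal
  proof (rule det_on_block)
    fix a b assume ab: "a \<in> ?A1" "b \<in> ?B1"
    then obtain u w where "a = Inl u" "b = Inr w" "w \<noteq> y" by auto
    thus "M1 a b = 0" by (auto simp: M1_def char_entry_def adj_matrix_def)
  qed (use finG fin\<Gamma> in auto)
  have d1a: "det_on ?A1 M1 = char_poly G"
  proof -
    have "det_on ?A1 M1 = det_on (verts G) (\<lambda>u v. M1 (Inl u) (Inl v))"
      by (rule det_on_reindex[OF _ finG]) simp
    also have "\<dots> = char_poly G"
      unfolding char_poly_entry
      by (rule det_on_cong[OF finG]) (simp add: M1_def char_entry_def adj_matrix_def)
    finally show ?thesis .
  qed
  have d1b: "det_on ?B1 M1 = char_poly (delete_vertex \<Gamma> y)"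
  proof -
    have "det_on ?B1 M1 = det_on (verts \<Gamma> - {y}) (\<lambda>u v. M1 (Inr u) (Inr v))"
      by (rule det_on_reindex) (use fin\<Gamma> in auto)
    also have "\<dots> = char_poly (delete_vertex \<Gamma> y)"
      unfolding char_poly_entry verts_delete
      by (rule det_on_cong) (use fin\<Gamma> in \<open>auto simp: M1_def char_entry_def adj_matrix_def\<close>)
    finally show ?thesis .
  qed
  define \<phi> where "\<phi> = (\<lambda>w. if w = y then Inl x else (Inr w :: 'a + 'b))"
  let ?A2 = "\<phi> ` verts \<Gamma>"
  let ?B2 = "Inl ` (verts G - {x}) :: ('a + 'b) set"
  have injphi: "inj_on \<phi> (verts \<Gamma>)" by (auto simp: inj_on_def \<phi>_def)
  have A2: "?A2 = insert (Inl x) ?B1" using y by (auto simp: \<phi>_def)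
  have W2: "verts ?H = ?A2 \<union> ?B2" using A2 x by auto
  have d2: "det_on (verts ?H) M2 = det_on ?A2 M2 * det_on ?B2 M2"
    unfolding W2
  proof (rule det_on_block)
    fix a b assume ab: "a \<in> ?A2" "b \<in> ?B2"
    then obtain u where b: "b = Inl u" "u \<noteq> x" by auto
    show "M2 a b = 0"
      using ab(1) b unfolding A2 by (auto simp: M2_def char_entry_def adj_matrix_def)
  qed (use finG fin\<Gamma> A2 in auto)
  have d2b: "det_on ?B2 M2 = char_poly (delete_vertex G x)"
  proof -
    have "det_on ?B2 M2 = det_on (verts G - {x}) (\<lambda>u v. M2 (Inl u) (Inl v))"
      by (rule det_on_reindex) (use finG in auto)
    also have "\<dots> = char_poly (delete_vertex G x)"
      unfolding char_poly_entry verts_delete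
      by (rule det_on_cong) (use finG in \<open>auto simp: M2_def char_entry_def adj_matrix_def\<close>)
    finally show ?thesis .
  qed
  define N where "N = (\<lambda>u v. M2 (\<phi> u) (\<phi> v))"
  have d2a: "det_on ?A2 M2 = det_on (verts \<Gamma>) N"
    unfolding N_def by (rule det_on_reindex[OF injphi fin\<Gamma>])
  have Nent: "N u v = (if u = y \<and> v = y then 0 else char_entry \<Gamma> u v)" if "u \<in> verts \<Gamma>" "v \<in> verts \<Gamma>" for u v
    using sg_irr[OF \<Gamma>]
    by (cases "u = y"; cases "v = y") (auto simp: N_def M2_def \<phi>_def char_entry_def adj_matrix_def)
  define Q where "Q = (\<lambda>u v. if u = y then (if v = y then [:0, 1:] else 0) else N u v)"
  have linG: "char_poly \<Gamma> = det_on (verts \<Gamma>) N + det_on (verts \<Gamma>) Q"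
    unfolding char_poly_entry
  proof (rule det_on_row_linear[OF fin\<Gamma> y])
    fix z assume z: "z \<in> verts \<Gamma>"
    show "char_entry \<Gamma> y z = N y z + Q y z"
      using Nent[OF y z] sg_irr[OF \<Gamma>, of y] by (cases "z = y") (auto simp: Q_def char_entry_def adj_matrix_def)
  next
    fix v z assume vz: "v \<in> verts \<Gamma>" "z \<in> verts \<Gamma>" "v \<noteq> y"
    show "char_entry \<Gamma> v z = N v z \<and> char_entry \<Gamma> v z = Q v z"
      using Nent[OF vz(1,2)] vz(3) by (simp add: Q_def)
  qed
  have dQ: "det_on (verts \<Gamma>) Q = [:0, 1:] * char_poly (delete_vertex \<Gamma> y)"
  proof -
    have "det_on (verts \<Gamma>) Q = Q y y * det_on (verts \<Gamma> - {y}) Q"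
      by (rule det_on_row_diag[OF fin\<Gamma> y]) (simp add: Q_def)
    also have "det_on (verts \<Gamma> - {y}) Q = char_poly (delete_vertex \<Gamma> y)"
      unfolding char_poly_entry verts_delete
      by (rule det_on_cong) (use fin\<Gamma> Nent in \<open>auto simp: Q_def char_entry_delete\<close>)
    finally show ?thesis by (simp add: Q_def)
  qed
  have "char_poly ?H = det_on (verts ?H) ?C" by (rule char_poly_entry)
  also have "\<dots> = char_poly G * char_poly (delete_vertex \<Gamma> y) +
      (char_poly \<Gamma> - [:0, 1:] * char_poly (delete_vertex \<Gamma> y)) * char_poly (delete_vertex G x)"
    using lin d1 d1a d1b d2 d2a d2b linG dQ by simp
  finally show ?thesis by (simp add: mult.commute)
qed

lemma graph_eqI: "verts G = verts H \<Longrightarrow> adj G = adj H \<Longrightarrow> G = H"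
  by (simp add: verts_def adj_def prod_eq_iff)

lemma neighb_fin: assumes "simple_graph G" shows "finite {z \<in> verts G. P z}"
  by (rule finite_subset[OF _ sg_fin[OF assms]]) auto

lemma deg_coal_l:
  assumes G: "simple_graph G" and u: "u \<in> verts G" "u \<noteq> x"
  shows "degree (coalescence G x \<Gamma> y) (Inl u) = degree G u"
proof -
  have "{z \<in> verts (coalescence G x \<Gamma> y). adj (coalescence G x \<Gamma> y) (Inl u) z} = Inl ` {v \<in> verts G. adj G u v}"
    using u by (auto simp: image_iff)
  thus ?thesis unfolding degree_def by (simp add: card_image)
qed

lemma deg_coal_x:
  assumes G: "simple_graph G" and \<Gamma>: "simple_graph \<Gamma>" and x: "x \<in> verts G"
  shows "degree (coalescence G x \<Gamma> y) (Inl x) = degree G x + degree \<Gamma> y"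
proof -
  have e: "{z \<in> verts (coalescence G x \<Gamma> y). adj (coalescence G x \<Gamma> y) (Inl x) z} =
      Inl ` {v \<in> verts G. adj G x v} \<union> Inr ` {w \<in> verts \<Gamma>. adj \<Gamma> y w}"
    using sg_irr[OF \<Gamma>, of y] by (auto simp: image_iff)
  have "card (Inl ` {v \<in> verts G. adj G x v} \<union> Inr ` {w \<in> verts \<Gamma>. adj \<Gamma> y w} :: ('a + 'b) set) =
      card (Inl ` {v \<in> verts G. adj G x v} :: ('a + 'b) set) + card (Inr ` {w \<in> verts \<Gamma>. adj \<Gamma> y w} :: ('a + 'b) set)"
    by (rule card_Un_disjoint) (use neighb_fin[OF G] neighb_fin[OF \<Gamma>] in auto)
  thus ?thesis unfolding degree_def e by (simp add: card_image)
qed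

lemma deg_coal_r:
  assumes G: "simple_graph G" and \<Gamma>: "simple_graph \<Gamma>" and x: "x \<in> verts G" and w: "w \<in> verts \<Gamma>" "w \<noteq> y"
  shows "degree (coalescence G x \<Gamma> y) (Inr w) = degree \<Gamma> w"
proof -
  let ?N = "{v \<in> verts \<Gamma>. adj \<Gamma> w v}"
  have finN: "finite ?N" using neighb_fin[OF \<Gamma>] .
  show ?thesis
  proof (cases "adj \<Gamma> w y")
    case True
    have e: "{z \<in> verts (coalescence G x \<Gamma> y). adj (coalescence G x \<Gamma> y) (Inr w) z} =
        insert (Inl x) (Inr ` (?N - {y}))"
      using True x w by (auto simp: image_iff)
    have "card (insert (Inl x) (Inr ` (?N - {y})) :: ('a + 'b) set) = Suc (card (?N - {y}))"
      using finN by (subst card_insert_disjoint) (auto simp: card_image)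
    also have "\<dots> = card ?N" using True finN sg_in2[OF \<Gamma> True]
      by (simp add: card_Diff_singleton) (metis Suc_pred card_gt_0_iff empty_iff mem_Collect_eq)
    finally show ?thesis unfolding degree_def e .
  next
    case False
    have e: "{z \<in> verts (coalescence G x \<Gamma> y). adj (coalescence G x \<Gamma> y) (Inr w) z} = Inr ` ?N"
      using False x w by (auto simp: image_iff)
    thus ?thesis unfolding degree_def e by (simp add: card_image)
  qed
qed

lemma delete_coal:
  assumes "w \<noteq> y"
  shows "delete_vertex (coalescence G x \<Gamma> y) (Inr w) = coalescence G x (delete_vertex \<Gamma> w) y"
proof (rule graph_eqI)
  show "verts (delete_vertex (coalescence G x \<Gamma> y) (Inr w)) = verts (coalescence G x (delete_vertex \<Gamma> w) y)"
    by auto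
  show "adj (delete_vertex (coalescence G x \<Gamma> y) (Inr w)) = adj (coalescence G x (delete_vertex \<Gamma> w) y)"
  proof (intro ext)
    fix p q show "adj (delete_vertex (coalescence G x \<Gamma> y) (Inr w)) p q = adj (coalescence G x (delete_vertex \<Gamma> w) y) p q"
      using assms by (cases p; cases q) auto
  qed
qed

lemma simple_delete_card: "simple_graph G \<Longrightarrow> w \<in> verts G \<Longrightarrow> card (verts (delete_vertex G w)) < card (verts G)"
  unfolding verts_delete by (rule card_Diff1_less[OF sg_fin])

lemma edges_fin:
  assumes G: "simple_graph G"
  shows "finite {{u, v} | u v. adj G u v}"
proof (rule finite_subset[of _ "Pow (verts G)"])
  show "{{u, v} | u v. adj G u v} \<subseteq> Pow (verts G)" using sg_in1[OF G] sg_in2[OF G] by auto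
qed (use sg_fin[OF G] in simp)

lemma num_edges_delete:
  assumes G: "simple_graph G" and x: "x \<in> verts G"
  shows "num_edges G = num_edges (delete_vertex G x) + degree G x"
proof -
  let ?E = "{{u, v} | u v. adj G u v}"
  let ?E' = "{{u, v} | u v. adj (delete_vertex G x) u v}"
  let ?S = "(\<lambda>v. {x, v}) ` {v \<in> verts G. adj G x v}"
  have e1: "e \<in> ?E' \<union> ?S" if "e \<in> ?E" for e
  proof -
    from that obtain u v where e: "e = {u, v}" "adj G u v" by blast
    show "e \<in> ?E' \<union> ?S"
    proof (cases "u = x")
      case True
      hence "e \<in> ?S" using e sg_in2[OF G e(2)] by blast
      thus ?thesis by blast
    next
      case False
      show ?thesis
      proof (cases "v = x")
        case True
        hence "e = {x, u}" "adj G x u" "u \<in> verts G" using e sg_in1[OF G e(2)] sg_sym[OF G e(2)] by auto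
        hence "e \<in> ?S" by blast
        thus ?thesis by blast
      next
        case False': False
        hence "adj (delete_vertex G x) u v" using e False by simp
        hence "e \<in> ?E'" using e(1) by blast
        thus ?thesis by blast
      qed
    qed
  qed
  have e2: "e \<in> ?E" if "e \<in> ?E' \<union> ?S" for e
  proof -
    from that show ?thesis
    proof
      assume "e \<in> ?E'"
      then obtain u v where "e = {u, v}" "adj (delete_vertex G x) u v" by blast
      thus ?thesis by auto
    next
      assume "e \<in> ?S"
      then obtain v where "e = {x, v}" "adj G x v" by blast
      thus ?thesis by blast
    qed
  qed
  have e: "?E = ?E' \<union> ?S"
  proof (rule equalityI)
    show "?E \<subseteq> ?E' \<union> ?S" by (rule subsetI, rule e1)
    show "?E' \<union> ?S \<subseteq> ?E" by (rule subsetI, rule e2)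
  qed
  have n1: "x \<notin> e" if "e \<in> ?E'" for e
  proof -
    from that obtain u v where "e = {u, v}" "adj (delete_vertex G x) u v" by blast
    thus ?thesis by auto
  qed
  have n2: "x \<in> e" if "e \<in> ?S" for e
  proof -
    from that obtain v where "e = {x, v}" by blast
    thus ?thesis by simp
  qed
  have disj: "?E' \<inter> ?S = {}" using n1 n2 by blast
  have finE: "finite ?E" using edges_fin[OF G] .
  have sub: "?E' \<subseteq> ?E" using e by (simp only: Un_upper1)
  have fin1: "finite ?E'" by (rule finite_subset[OF sub finE])
  have fin2: "finite ?S" using neighb_fin[OF G] by blast
  have "card ?E = card (?E' \<union> ?S)" using e by simp
  also have "\<dots> = card ?E' + card ?S" by (rule card_Un_disjoint[OF fin1 fin2 disj])
  finally have c: "card ?E = card ?E' + card ?S" .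
  have "card ?S = card {v \<in> verts G. adj G x v}"
  proof (rule card_image, rule inj_onI)
    fix v v' assume "v \<in> {v \<in> verts G. adj G x v}" "v' \<in> {v \<in> verts G. adj G x v}" "{x, v} = {x, v'}"
    moreover have "v \<noteq> x" "v' \<noteq> x" using calculation sg_irr[OF G, of x] by auto
    ultimately show "v = v'" by (auto simp: doubleton_eq_iff)
  qed
  hence "card ?S = degree G x" by (simp add: degree_def)
  thus ?thesis using c by (simp add: num_edges_def)
qed

section \<open>Cone\<close>

lemma verts_cone [simp]: "verts (cone G) = insert None (Some ` verts G)"
  by (simp add: cone_def verts_def)
lemma adj_cone_ss [simp]: "adj (cone G) (Some u) (Some v) = adj G u v"
  by (simp add: cone_def adj_def)
lemma adj_cone_ns [simp]: "adj (cone G) None (Some v) = (v \<in> verts G)"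
  by (simp add: cone_def adj_def)
lemma adj_cone_sn [simp]: "adj (cone G) (Some v) None = (v \<in> verts G)"
  by (simp add: cone_def adj_def)
lemma adj_cone_nn [simp]: "adj (cone G) None None = False"
  by (simp add: cone_def adj_def)

lemma simple_cone:
  assumes G: "simple_graph G"
  shows "simple_graph (cone G)"
  unfolding simple_graph_def
proof (intro conjI allI impI)
  show "finite (verts (cone G))" using sg_fin[OF G] by simp
  fix p q assume a: "adj (cone G) p q"
  show "p \<in> verts (cone G)" using a sg_in1[OF G] by (cases p; cases q) auto
  show "q \<in> verts (cone G)" using a sg_in2[OF G] by (cases p; cases q) auto
  show "adj (cone G) q p" using a sg_sym[OF G] by (cases p; cases q) auto
next
  fix p show "\<not> adj (cone G) p p" using sg_irr[OF G] by (cases p) auto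
qed

lemma card_cone: assumes "simple_graph G" shows "card (verts (cone G)) = card (verts G) + 1"
proof -
  have "card (insert None (Some ` verts G)) = Suc (card (Some ` verts G))"
    by (rule card_insert_disjoint) (use sg_fin[OF assms] in auto)
  thus ?thesis by (simp add: card_image)
qed

lemma deg_cone_some:
  assumes G: "simple_graph G" and v: "v \<in> verts G"
  shows "degree (cone G) (Some v) = degree G v + 1"
proof -
  have e: "{z \<in> verts (cone G). adj (cone G) (Some v) z} = insert None (Some ` {u \<in> verts G. adj G v u})"
    using v by (auto simp: image_iff)
  thus ?thesis unfolding degree_def e using neighb_fin[OF G] by (simp add: card_image)
qed

lemma deg_cone_none:
  assumes G: "simple_graph G"
  shows "degree (cone G) None = card (verts G)"
proof -
  have e: "{z \<in> verts (cone G). adj (cone G) None z} = Some ` verts G" by auto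
  thus ?thesis unfolding degree_def e by (simp add: card_image)
qed

lemma delete_cone: "delete_vertex (cone H) (Some w) = cone (delete_vertex H w)"
proof (rule graph_eqI)
  show "verts (delete_vertex (cone H) (Some w)) = verts (cone (delete_vertex H w))" by auto
  show "adj (delete_vertex (cone H) (Some w)) = adj (cone (delete_vertex H w))"
  proof (intro ext)
    fix p q show "adj (delete_vertex (cone H) (Some w)) p q = adj (cone (delete_vertex H w)) p q"
      by (cases p; cases q) auto
  qed
qed

lemma num_edges_cone:
  assumes G: "simple_graph G"
  shows "num_edges (cone G) = num_edges G + card (verts G)"
proof -
  let ?E = "{{u, v} | u v. adj G u v}"
  let ?F = "{{u, v} | u v. adj (cone G) u v}"
  let ?I = "(\<lambda>e. Some ` e) ` ?E"
  let ?S = "(\<lambda>v. {None, Some v}) ` verts G"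
  have e1: "e \<in> ?I \<union> ?S" if "e \<in> ?F" for e
  proof -
    from that obtain p q where e: "e = {p, q}" "adj (cone G) p q" by blast
    show ?thesis
    proof (cases p)
      case None
      then obtain v where q: "q = Some v" using e(2) by (cases q) auto
      hence "v \<in> verts G" using e(2) None by simp
      hence "e \<in> ?S" using e(1) None q by blast
      thus ?thesis by blast
    next
      case (Some u)
      show ?thesis
      proof (cases q)
        case None
        hence "u \<in> verts G" using e(2) Some by simp
        moreover have "e = {None, Some u}" using e(1) None Some by auto
        ultimately have "e \<in> ?S" by blast
        thus ?thesis by blast
      next
        case (Some v)
        hence "adj G u v" using e(2) \<open>p = Some u\<close> by simp
        hence "{u, v} \<in> ?E" by blast
        moreover have "e = Some ` {u, v}" using e(1) Some \<open>p = Some u\<close> by simp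
        ultimately have "e \<in> ?I" by blast
        thus ?thesis by blast
      qed
    qed
  qed
  have e2: "e \<in> ?F" if "e \<in> ?I \<union> ?S" for e
  proof -
    from that show ?thesis
    proof
      assume "e \<in> ?I"
      then obtain e' where "e' \<in> ?E" "e = Some ` e'" by blast
      then obtain u v where "e = {Some u, Some v}" "adj G u v" by blast
      hence "e = {Some u, Some v}" "adj (cone G) (Some u) (Some v)" by simp_all
      thus ?thesis by blast
    next
      assume "e \<in> ?S"
      then obtain v where "e = {None, Some v}" "v \<in> verts G" by blast
      hence "e = {None, Some v}" "adj (cone G) None (Some v)" by simp_all
      thus ?thesis by blast
    qed
  qed
  have e: "?F = ?I \<union> ?S"
  proof (rule equalityI)
    show "?F \<subseteq> ?I \<union> ?S" by (rule subsetI, rule e1)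
    show "?I \<union> ?S \<subseteq> ?F" by (rule subsetI, rule e2)
  qed
  have n1: "None \<notin> e" if "e \<in> ?I" for e using that by blast
  have n2: "None \<in> e" if "e \<in> ?S" for e using that by blast
  have disj: "?I \<inter> ?S = {}" using n1 n2 by blast
  have finE: "finite ?E" using edges_fin[OF G] .
  have fin1: "finite ?I" using finE by (rule finite_imageI)
  have fin2: "finite ?S" using sg_fin[OF G] by (rule finite_imageI)
  have "card ?F = card (?I \<union> ?S)" using e by simp
  also have "\<dots> = card ?I + card ?S" by (rule card_Un_disjoint[OF fin1 fin2 disj])
  finally have c: "card ?F = card ?I + card ?S" .
  have "card ?I = card ?E"
    by (rule card_image) (simp add: inj_on_def inj_image_eq_iff)
  moreover have "card ?S = card (verts G)"
    by (rule card_image) (auto simp: inj_on_def doubleton_eq_iff)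
  ultimately show ?thesis using c by (simp add: num_edges_def)
qed

lemma num_edges_small:
  assumes G: "simple_graph G" and c: "card (verts G) < 2"
  shows "num_edges G = 0"
proof -
  have "{{u, v} | u v. adj G u v} = {}"
  proof (rule ccontr)
    assume "{{u, v} | u v. adj G u v} \<noteq> {}"
    then obtain u v where a: "adj G u v" by blast
    hence "{u, v} \<subseteq> verts G" using sg_in1[OF G a] sg_in2[OF G a] by simp
    hence "card {u, v} \<le> card (verts G)" by (rule card_mono[OF sg_fin[OF G]])
    moreover have "u \<noteq> v" using a sg_irr[OF G] by metis
    ultimately show False using c by simp
  qed
  thus ?thesis by (simp add: num_edges_def)
qed

lemma num_edges_eq_char':
  assumes "simple_graph G" "simple_graph H" "char_poly G = char_poly H"
    "card (verts G) = card (verts H)"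
  shows "num_edges G = num_edges H"
proof (cases "card (verts G) \<ge> 2")
  case True thus ?thesis using num_edges_eq_char[OF assms] by simp
next
  case False thus ?thesis using num_edges_small[OF assms(1)] num_edges_small[OF assms(2)] assms(4) by simp
qed

lemma powi_nth0: "((1 - fps_X ^ 2 :: real fps) powi k) $ 0 = 1"
proof -
  have a: "(1 - fps_X ^ 2 :: real fps) $ 0 = 1" by (simp add: fps_X_power_iff)
  show ?thesis
    unfolding power_int_def using a by (auto simp: fps_power_zeroth)
qed

lemma zeta_cancel:
  assumes G: "simple_graph G" and H: "simple_graph H"
    and c: "card (verts G) = card (verts H)" and m: "num_edges G = num_edges H"
    and z: "ihara_zeta G = ihara_zeta H"
  shows "ihara_poly G = ihara_poly H"
proof -
  define c where "c = (1 - fps_X ^ 2 :: real fps) powi (int (card (verts G)) - int (num_edges G))"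
  have c0: "c $ 0 \<noteq> 0" using powi_nth0 by (simp add: c_def)
  have "c * inverse (fps_of_poly (ihara_poly G)) = c * inverse (fps_of_poly (ihara_poly H))"
    using z c m by (simp add: ihara_zeta_def c_def)
  hence "inverse c * (c * inverse (fps_of_poly (ihara_poly G))) = inverse c * (c * inverse (fps_of_poly (ihara_poly H)))"
    by simp
  hence "inverse (fps_of_poly (ihara_poly G)) = inverse (fps_of_poly (ihara_poly H))"
    using inverse_mult_eq_1[OF c0] by (simp add: mult.assoc[symmetric])
  hence "inverse (inverse (fps_of_poly (ihara_poly G))) = inverse (inverse (fps_of_poly (ihara_poly H)))"
    by simp
  moreover have "fps_of_poly (ihara_poly G) $ 0 \<noteq> 0" using ihara_const[OF G] by simp
  moreover have "fps_of_poly (ihara_poly H) $ 0 \<noteq> 0" using ihara_const[OF H] by simp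
  ultimately have "fps_of_poly (ihara_poly G) = fps_of_poly (ihara_poly H)"
    by (simp add: fps_inverse_idempotent)
  thus ?thesis by simp
qed

lemma prod_coal_split:
  assumes G: "simple_graph G" and \<Gamma>: "simple_graph \<Gamma>" and x: "x \<in> verts G"
  shows "(\<Prod>p\<in>verts (coalescence G x \<Gamma> y). f p) =
    (\<Prod>u\<in>verts G - {x}. f (Inl u)) * f (Inl x) * (\<Prod>w\<in>verts \<Gamma> - {y}. f (Inr w))"
proof -
  have finG: "finite (verts G)" using sg_fin[OF G] .
  have fin\<Gamma>: "finite (verts \<Gamma>)" using sg_fin[OF \<Gamma>] .
  have e: "verts (coalescence G x \<Gamma> y) = insert (Inl x) (Inl ` (verts G - {x})) \<union> Inr ` (verts \<Gamma> - {y})"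
    using x by auto
  have "(\<Prod>p\<in>insert (Inl x) (Inl ` (verts G - {x})) \<union> Inr ` (verts \<Gamma> - {y}). f p) =
      (\<Prod>p\<in>insert (Inl x) (Inl ` (verts G - {x})). f p) * (\<Prod>p\<in>Inr ` (verts \<Gamma> - {y}). f p)"
    by (rule prod.union_disjoint) (use finG fin\<Gamma> in auto)
  also have "(\<Prod>p\<in>insert (Inl x) (Inl ` (verts G - {x})). f p) = f (Inl x) * (\<Prod>p\<in>Inl ` (verts G - {x}). f p)"
    by (rule prod.insert) (use finG in auto)
  also have "(\<Prod>p\<in>Inl ` (verts G - {x}). f p) = (\<Prod>u\<in>verts G - {x}. f (Inl u))"
    by (rule prod.reindex_cong[of Inl]) auto
  also have "(\<Prod>p\<in>Inr ` (verts \<Gamma> - {y}). f p) = (\<Prod>w\<in>verts \<Gamma> - {y}. f (Inr w))"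
    by (rule prod.reindex_cong[of Inr]) auto
  finally show ?thesis unfolding e by (simp add: algebra_simps)
qed

lemma prod_cone_split:
  assumes G: "simple_graph G"
  shows "(\<Prod>p\<in>verts (cone G). f p) = f None * (\<Prod>v\<in>verts G. f (Some v))"
proof -
  have "(\<Prod>p\<in>insert None (Some ` verts G). f p) = f None * (\<Prod>p\<in>Some ` verts G. f p)"
    by (rule prod.insert) (use sg_fin[OF G] in auto)
  also have "(\<Prod>p\<in>Some ` verts G. f p) = (\<Prod>v\<in>verts G. f (Some v))"
    by (rule prod.reindex_cong[of Some]) auto
  finally show ?thesis by simp
qed

lemma part2_core:
  fixes G1 G2 :: "'a graph"
  assumes G1: "simple_graph G1" and G2: "simple_graph G2"
    and x1: "x1 \<in> verts G1" and x2: "x2 \<in> verts G2"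
    and c12: "card (verts G1) = card (verts G2)"
    and dx: "degree G1 x1 = degree G2 x2" and dx1: "degree G1 x1 \<ge> 2"
    and U: "(\<Prod>u\<in>verts G1 - {x1}. real (degree G1 u) - 1) \<noteq> (\<Prod>u\<in>verts G2 - {x2}. real (degree G2 u) - 1)"
  shows "simple_graph (\<Gamma> :: 'b graph) \<Longrightarrow> y \<in> verts \<Gamma> \<Longrightarrow>
    ihara_poly (coalescence G1 x1 \<Gamma> y) \<noteq> ihara_poly (coalescence G2 x2 \<Gamma> y)"
proof (induction "card (verts \<Gamma>)" arbitrary: \<Gamma> rule: less_induct)
  case less
  note \<Gamma> = less.prems(1) and y = less.prems(2)
  show ?case
  proof (cases "\<exists>w \<in> verts \<Gamma>. w \<noteq> y \<and> degree \<Gamma> w \<le> 1")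
    case True
    then obtain w where w: "w \<in> verts \<Gamma>" "w \<noteq> y" "degree \<Gamma> w \<le> 1" by blast
    let ?\<Gamma>' = "delete_vertex \<Gamma> w"
    have \<Gamma>': "simple_graph ?\<Gamma>'" by (rule simple_delete[OF \<Gamma>])
    have y': "y \<in> verts ?\<Gamma>'" using y w by simp
    have IH: "ihara_poly (coalescence G1 x1 ?\<Gamma>' y) \<noteq> ihara_poly (coalescence G2 x2 ?\<Gamma>' y)"
      by (rule less.hyps[OF simple_delete_card[OF \<Gamma> w(1)] \<Gamma>' y'])
    have H1: "simple_graph (coalescence G1 x1 \<Gamma> y)" by (rule simple_coal[OF G1 \<Gamma> x1])
    have H2: "simple_graph (coalescence G2 x2 \<Gamma> y)" by (rule simple_coal[OF G2 \<Gamma> x2])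
    have wH1: "Inr w \<in> verts (coalescence G1 x1 \<Gamma> y)" using w by simp
    have wH2: "Inr w \<in> verts (coalescence G2 x2 \<Gamma> y)" using w by simp
    have d1: "degree (coalescence G1 x1 \<Gamma> y) (Inr w) = degree \<Gamma> w" by (rule deg_coal_r[OF G1 \<Gamma> x1 w(1,2)])
    have d2: "degree (coalescence G2 x2 \<Gamma> y) (Inr w) = degree \<Gamma> w" by (rule deg_coal_r[OF G2 \<Gamma> x2 w(1,2)])
    show ?thesis
    proof (cases "degree \<Gamma> w = 1")
      case True
      have "ihara_poly (coalescence G1 x1 \<Gamma> y) = ihara_poly (coalescence G1 x1 ?\<Gamma>' y)"
        using ihara_leaf[OF H1 wH1] d1 True by (simp add: delete_coal[OF w(2)])
      moreover have "ihara_poly (coalescence G2 x2 \<Gamma> y) = ihara_poly (coalescence G2 x2 ?\<Gamma>' y)"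
        using ihara_leaf[OF H2 wH2] d2 True by (simp add: delete_coal[OF w(2)])
      ultimately show ?thesis using IH by simp
    next
      case False
      hence d0: "degree \<Gamma> w = 0" using w(3) by simp
      define q where "q = [:1, 0, -1::real:]"
      have nz: "q \<noteq> 0" by (simp add: q_def)
      have "ihara_poly (coalescence G1 x1 \<Gamma> y) = q * ihara_poly (coalescence G1 x1 ?\<Gamma>' y)"
        using ihara_isolated[OF H1 wH1] d1 d0 unfolding q_def by (simp only: delete_coal[OF w(2)])
      moreover have "ihara_poly (coalescence G2 x2 \<Gamma> y) = q * ihara_poly (coalescence G2 x2 ?\<Gamma>' y)"
        using ihara_isolated[OF H2 wH2] d2 d0 unfolding q_def by (simp only: delete_coal[OF w(2)])
      ultimately show ?thesis using IH nz by simp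
    qed
  next
    case False
    hence dg: "degree \<Gamma> w \<ge> 2" if "w \<in> verts \<Gamma> - {y}" for w using that by auto
    let ?H1 = "coalescence G1 x1 \<Gamma> y" and ?H2 = "coalescence G2 x2 \<Gamma> y"
    have H1: "simple_graph ?H1" by (rule simple_coal[OF G1 \<Gamma> x1])
    have H2: "simple_graph ?H2" by (rule simple_coal[OF G2 \<Gamma> x2])
    have cH: "card (verts ?H1) = card (verts ?H2)" using card_coal[OF G1 \<Gamma> y] card_coal[OF G2 \<Gamma> y] c12 by simp
    define R where "R = (\<Prod>w\<in>verts \<Gamma> - {y}. real (degree \<Gamma> w) - 1)"
    define X where "X = real (degree G1 x1 + degree \<Gamma> y) - 1"
    have R0: "R \<noteq> 0" unfolding R_def
    proof (subst prod_zero_iff)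
      show "finite (verts \<Gamma> - {y})" using sg_fin[OF \<Gamma>] by simp
      show "\<not> (\<exists>w\<in>verts \<Gamma> - {y}. real (degree \<Gamma> w) - 1 = 0)"
      proof
        assume "\<exists>w\<in>verts \<Gamma> - {y}. real (degree \<Gamma> w) - 1 = 0"
        then obtain w where "w \<in> verts \<Gamma> - {y}" "real (degree \<Gamma> w) - 1 = 0" by blast
        thus False using dg[of w] by simp
      qed
    qed
    have X0: "X \<noteq> 0" using dx1 by (simp add: X_def)
    have top: "coeff (ihara_poly (coalescence Gi xi \<Gamma> y)) (2 * card (verts (coalescence Gi xi \<Gamma> y))) =
        (\<Prod>u\<in>verts Gi - {xi}. real (degree Gi u) - 1) * X * R"
      if Gi: "simple_graph Gi" and xi: "xi \<in> verts Gi" and dxi: "degree Gi xi = degree G1 x1" for Gi :: "'a graph" and xi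
    proof -
      have "coeff (ihara_poly (coalescence Gi xi \<Gamma> y)) (2 * card (verts (coalescence Gi xi \<Gamma> y))) =
          (\<Prod>p\<in>verts (coalescence Gi xi \<Gamma> y). real (degree (coalescence Gi xi \<Gamma> y) p) - 1)"
        by (rule ihara_top[OF simple_coal[OF Gi \<Gamma> xi]])
      also have "\<dots> = (\<Prod>u\<in>verts Gi - {xi}. real (degree (coalescence Gi xi \<Gamma> y) (Inl u)) - 1) *
            (real (degree (coalescence Gi xi \<Gamma> y) (Inl xi)) - 1) *
            (\<Prod>w\<in>verts \<Gamma> - {y}. real (degree (coalescence Gi xi \<Gamma> y) (Inr w)) - 1)"
        by (rule prod_coal_split[OF Gi \<Gamma> xi])
      also have "(\<Prod>u\<in>verts Gi - {xi}. real (degree (coalescence Gi xi \<Gamma> y) (Inl u)) - 1) =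
          (\<Prod>u\<in>verts Gi - {xi}. real (degree Gi u) - 1)"
        by (rule prod.cong[OF refl]) (simp add: deg_coal_l[OF Gi])
      also have "real (degree (coalescence Gi xi \<Gamma> y) (Inl xi)) - 1 = X"
        using deg_coal_x[OF Gi \<Gamma> xi] dxi by (simp add: X_def)
      also have "(\<Prod>w\<in>verts \<Gamma> - {y}. real (degree (coalescence Gi xi \<Gamma> y) (Inr w)) - 1) = R"
        unfolding R_def by (rule prod.cong[OF refl]) (simp add: deg_coal_r[OF Gi \<Gamma> xi])
      finally show ?thesis .
    qed
    show ?thesis
    proof
      assume eq: "ihara_poly ?H1 = ihara_poly ?H2"
      have "(\<Prod>u\<in>verts G1 - {x1}. real (degree G1 u) - 1) * X * R =
          (\<Prod>u\<in>verts G2 - {x2}. real (degree G2 u) - 1) * X * R"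
        using top[OF G1 x1 refl] top[OF G2 x2 dx[symmetric]] eq cH by metis
      thus False using U X0 R0 by simp
    qed
  qed
qed

lemma part3_core:
  fixes G1 G2 :: "'a graph"
  assumes G1: "simple_graph G1" and G2: "simple_graph G2"
    and x1: "x1 \<in> verts G1" and x2: "x2 \<in> verts G2"
    and c12: "card (verts G1) = card (verts G2)" and c2: "card (verts G1) \<ge> 2"
    and dx: "degree G1 x1 = degree G2 x2" and dx1: "degree G1 x1 \<ge> 1"
    and U: "(\<Prod>u\<in>verts G1 - {x1}. real (degree G1 u)) \<noteq> (\<Prod>u\<in>verts G2 - {x2}. real (degree G2 u))"
  shows "simple_graph (\<Gamma> :: 'b graph) \<Longrightarrow> y \<in> verts \<Gamma> \<Longrightarrow>
    ihara_poly (cone (coalescence G1 x1 \<Gamma> y)) \<noteq> ihara_poly (cone (coalescence G2 x2 \<Gamma> y))"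
proof (induction "card (verts \<Gamma>)" arbitrary: \<Gamma> rule: less_induct)
  case less
  note \<Gamma> = less.prems(1) and y = less.prems(2)
  show ?case
  proof (cases "\<exists>w \<in> verts \<Gamma>. w \<noteq> y \<and> degree \<Gamma> w = 0")
    case True
    then obtain w where w: "w \<in> verts \<Gamma>" "w \<noteq> y" "degree \<Gamma> w = 0" by blast
    let ?\<Gamma>' = "delete_vertex \<Gamma> w"
    have \<Gamma>': "simple_graph ?\<Gamma>'" by (rule simple_delete[OF \<Gamma>])
    have y': "y \<in> verts ?\<Gamma>'" using y w by simp
    have IH: "ihara_poly (cone (coalescence G1 x1 ?\<Gamma>' y)) \<noteq> ihara_poly (cone (coalescence G2 x2 ?\<Gamma>' y))"
      by (rule less.hyps[OF simple_delete_card[OF \<Gamma> w(1)] \<Gamma>' y'])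
    have step: "ihara_poly (cone (coalescence Gi xi \<Gamma> y)) = ihara_poly (cone (coalescence Gi xi ?\<Gamma>' y))"
      if Gi: "simple_graph Gi" and xi: "xi \<in> verts Gi" for Gi :: "'a graph" and xi
    proof -
      have H: "simple_graph (coalescence Gi xi \<Gamma> y)" by (rule simple_coal[OF Gi \<Gamma> xi])
      have wH: "Inr w \<in> verts (coalescence Gi xi \<Gamma> y)" using w by simp
      have d: "degree (cone (coalescence Gi xi \<Gamma> y)) (Some (Inr w)) = 1"
        using deg_cone_some[OF H wH] deg_coal_r[OF Gi \<Gamma> xi w(1,2)] w(3) by simp
      have "ihara_poly (cone (coalescence Gi xi \<Gamma> y)) =
          ihara_poly (delete_vertex (cone (coalescence Gi xi \<Gamma> y)) (Some (Inr w)))"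
        by (rule ihara_leaf[OF simple_cone[OF H] _ d]) (use wH in simp)
      also have "\<dots> = ihara_poly (cone (coalescence Gi xi ?\<Gamma>' y))"
        by (simp only: delete_cone delete_coal[OF w(2)])
      finally show ?thesis .
    qed
    show ?thesis using step[OF G1 x1] step[OF G2 x2] IH by simp
  next
    case False
    hence dg: "degree \<Gamma> w \<ge> 1" if "w \<in> verts \<Gamma> - {y}" for w using that by auto
    let ?H1 = "coalescence G1 x1 \<Gamma> y" and ?H2 = "coalescence G2 x2 \<Gamma> y"
    have H1: "simple_graph ?H1" by (rule simple_coal[OF G1 \<Gamma> x1])
    have H2: "simple_graph ?H2" by (rule simple_coal[OF G2 \<Gamma> x2])
    have cH: "card (verts ?H1) = card (verts ?H2)" using card_coal[OF G1 \<Gamma> y] card_coal[OF G2 \<Gamma> y] c12 by simp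
    have cC: "card (verts (cone ?H1)) = card (verts (cone ?H2))" using card_cone[OF H1] card_cone[OF H2] cH by simp
    define N where "N = real (card (verts ?H1)) - 1"
    define R where "R = (\<Prod>w\<in>verts \<Gamma> - {y}. real (degree \<Gamma> w))"
    define X where "X = real (degree G1 x1 + degree \<Gamma> y)"
    have R0: "R \<noteq> 0" unfolding R_def
    proof (subst prod_zero_iff)
      show "finite (verts \<Gamma> - {y})" using sg_fin[OF \<Gamma>] by simp
      show "\<not> (\<exists>w\<in>verts \<Gamma> - {y}. real (degree \<Gamma> w) = 0)"
      proof
        assume "\<exists>w\<in>verts \<Gamma> - {y}. real (degree \<Gamma> w) = 0"
        then obtain w where "w \<in> verts \<Gamma> - {y}" "real (degree \<Gamma> w) = 0" by blast
        thus False using dg[of w] by simp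
      qed
    qed
    have X0: "X \<noteq> 0" using dx1 by (simp add: X_def)
    have N0: "N \<noteq> 0" using card_coal[OF G1 \<Gamma> y] c2 by (simp add: N_def)
    have top: "coeff (ihara_poly (cone (coalescence Gi xi \<Gamma> y))) (2 * card (verts (cone (coalescence Gi xi \<Gamma> y)))) =
        N * ((\<Prod>u\<in>verts Gi - {xi}. real (degree Gi u)) * X * R)"
      if Gi: "simple_graph Gi" and xi: "xi \<in> verts Gi" and dxi: "degree Gi xi = degree G1 x1"
        and ci: "card (verts Gi) = card (verts G1)" for Gi :: "'a graph" and xi
    proof -
      let ?H = "coalescence Gi xi \<Gamma> y"
      have H: "simple_graph ?H" by (rule simple_coal[OF Gi \<Gamma> xi])
      have "coeff (ihara_poly (cone ?H)) (2 * card (verts (cone ?H))) =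
          (\<Prod>p\<in>verts (cone ?H). real (degree (cone ?H) p) - 1)"
        by (rule ihara_top[OF simple_cone[OF H]])
      also have "\<dots> = (real (degree (cone ?H) None) - 1) * (\<Prod>v\<in>verts ?H. real (degree (cone ?H) (Some v)) - 1)"
        by (rule prod_cone_split[OF H])
      also have "real (degree (cone ?H) None) - 1 = N"
        using deg_cone_none[OF H] card_coal[OF Gi \<Gamma> y] card_coal[OF G1 \<Gamma> y] ci by (simp add: N_def)
      also have "(\<Prod>v\<in>verts ?H. real (degree (cone ?H) (Some v)) - 1) = (\<Prod>v\<in>verts ?H. real (degree ?H v))"
        by (rule prod.cong[OF refl]) (simp add: deg_cone_some[OF H])
      also have "\<dots> = (\<Prod>u\<in>verts Gi - {xi}. real (degree ?H (Inl u))) * real (degree ?H (Inl xi)) *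
            (\<Prod>w\<in>verts \<Gamma> - {y}. real (degree ?H (Inr w)))"
        by (rule prod_coal_split[OF Gi \<Gamma> xi])
      also have "(\<Prod>u\<in>verts Gi - {xi}. real (degree ?H (Inl u))) = (\<Prod>u\<in>verts Gi - {xi}. real (degree Gi u))"
        by (rule prod.cong[OF refl]) (simp add: deg_coal_l[OF Gi])
      also have "real (degree ?H (Inl xi)) = X"
        using deg_coal_x[OF Gi \<Gamma> xi] dxi by (simp add: X_def)
      also have "(\<Prod>w\<in>verts \<Gamma> - {y}. real (degree ?H (Inr w))) = R"
        unfolding R_def by (rule prod.cong[OF refl]) (simp add: deg_coal_r[OF Gi \<Gamma> xi])
      finally show ?thesis .
    qed
    show ?thesis
    proof
      assume eq: "ihara_poly (cone ?H1) = ihara_poly (cone ?H2)"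
      have "N * ((\<Prod>u\<in>verts G1 - {x1}. real (degree G1 u)) * X * R) =
          N * ((\<Prod>u\<in>verts G2 - {x2}. real (degree G2 u)) * X * R)"
        using top[OF G1 x1 refl refl] top[OF G2 x2 dx[symmetric] c12[symmetric]] eq cC by metis
      thus False using U X0 R0 N0 by simp
    qed
  qed
qed

lemma card_ge2_of_degree:
  assumes G: "simple_graph G" and x: "x \<in> verts G" and d: "degree G x \<ge> 1"
  shows "card (verts G) \<ge> 2"
proof -
  have "card {z \<in> verts G. adj G x z} \<noteq> 0" using d by (simp add: degree_def)
  hence "{z \<in> verts G. adj G x z} \<noteq> {}" by (metis card.empty)
  then obtain v where v: "v \<in> verts G" "adj G x v" by blast
  have "x \<noteq> v" using v sg_irr[OF G] by metis
  moreover have "{x, v} \<subseteq> verts G" using x v by simp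
  hence "card {x, v} \<le> card (verts G)" by (rule card_mono[OF sg_fin[OF G]])
  ultimately show ?thesis by simp
qed

lemma int_to_real_prod:
  "real_of_int (\<Prod>v\<in>A. int (f v) - 1) = (\<Prod>v\<in>A. real (f v) - 1)"
  "real_of_int (\<Prod>v\<in>A. int (f v)) = (\<Prod>v\<in>A. real (f v))"
  by (simp_all add: of_int_prod)

theorem proposition4p4:
  fixes G1 G2 :: "'a graph" and x1 x2 :: 'a and n :: nat
  assumes "simple_graph G1" and "simple_graph G2"
    and "card (verts G1) = n" and "card (verts G2) = n"
    and "adj_spectrum G1 = adj_spectrum G2"
    and "degree_sequence G1 \<noteq> degree_sequence G2"
    and "x1 \<in> verts G1" and "x2 \<in> verts G2"
    and "adj_spectrum (delete_vertex G1 x1) = adj_spectrum (delete_vertex G2 x2)"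
  shows "(\<forall>(\<Gamma> :: 'b graph) y. simple_graph \<Gamma> \<and> y \<in> verts \<Gamma> \<longrightarrow>
            adj_spectrum (coalescence G1 x1 \<Gamma> y) = adj_spectrum (coalescence G2 x2 \<Gamma> y))
       \<and> (min_degree_at_least G1 2 \<and> min_degree_at_least G2 2 \<and>
          (\<Prod>v \<in> verts G1 - {x1}. int (degree G1 v) - 1) \<noteq>
          (\<Prod>v \<in> verts G2 - {x2}. int (degree G2 v) - 1) \<longrightarrow>
          (\<forall>(\<Gamma> :: 'b graph) y. simple_graph \<Gamma> \<and> y \<in> verts \<Gamma> \<longrightarrow>
            ihara_zeta (coalescence G1 x1 \<Gamma> y) \<noteq> ihara_zeta (coalescence G2 x2 \<Gamma> y)))
       \<and> (min_degree_at_least G1 1 \<and> min_degree_at_least G2 1 \<and>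
          (\<Prod>v \<in> verts G1 - {x1}. int (degree G1 v)) \<noteq>
          (\<Prod>v \<in> verts G2 - {x2}. int (degree G2 v)) \<longrightarrow>
          (\<forall>(\<Gamma> :: 'b graph) y. simple_graph \<Gamma> \<and> y \<in> verts \<Gamma> \<longrightarrow>
            ihara_zeta (cone (coalescence G1 x1 \<Gamma> y)) \<noteq>
            ihara_zeta (cone (coalescence G2 x2 \<Gamma> y))))"
proof -
  note G1 = assms(1) and G2 = assms(2) and x1 = assms(7) and x2 = assms(8)
  have cpG: "char_poly G1 = char_poly G2" by (rule char_poly_eq_of_spectrum[OF G1 G2 assms(5)])
  have cpD: "char_poly (delete_vertex G1 x1) = char_poly (delete_vertex G2 x2)"
    by (rule char_poly_eq_of_spectrum[OF simple_delete[OF G1] simple_delete[OF G2] assms(9)])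
  have P1: "char_poly (coalescence G1 x1 \<Gamma> y) = char_poly (coalescence G2 x2 \<Gamma> y)"
    if "simple_graph (\<Gamma> :: 'b graph)" "y \<in> verts \<Gamma>" for \<Gamma> y
    using char_poly_coal[OF G1 that(1) x1 that(2)] char_poly_coal[OF G2 that(1) x2 that(2)] cpG cpD by simp
  have c12: "card (verts G1) = card (verts G2)" using assms(3,4) by simp
  have cH: "card (verts (coalescence G1 x1 \<Gamma> y)) = card (verts (coalescence G2 x2 \<Gamma> y))"
    if "simple_graph (\<Gamma> :: 'b graph)" "y \<in> verts \<Gamma>" for \<Gamma> y
    using card_coal[OF G1 that] card_coal[OF G2 that] c12 by simp
  have mH: "num_edges (coalescence G1 x1 \<Gamma> y) = num_edges (coalescence G2 x2 \<Gamma> y)"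
    if "simple_graph (\<Gamma> :: 'b graph)" "y \<in> verts \<Gamma>" for \<Gamma> y
    by (rule num_edges_eq_char'[OF simple_coal[OF G1 that(1) x1] simple_coal[OF G2 that(1) x2] P1[OF that] cH[OF that]])
  have mG: "num_edges G1 = num_edges G2" by (rule num_edges_eq_char'[OF G1 G2 cpG c12])
  have cD: "card (verts (delete_vertex G1 x1)) = card (verts (delete_vertex G2 x2))"
    using c12 x1 x2 sg_fin[OF G1] sg_fin[OF G2] by simp
  have mD: "num_edges (delete_vertex G1 x1) = num_edges (delete_vertex G2 x2)"
    by (rule num_edges_eq_char'[OF simple_delete[OF G1] simple_delete[OF G2] cpD cD])
  have dx: "degree G1 x1 = degree G2 x2"
    using num_edges_delete[OF G1 x1] num_edges_delete[OF G2 x2] mG mD by simp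
  have part1: "\<forall>(\<Gamma> :: 'b graph) y. simple_graph \<Gamma> \<and> y \<in> verts \<Gamma> \<longrightarrow>
            adj_spectrum (coalescence G1 x1 \<Gamma> y) = adj_spectrum (coalescence G2 x2 \<Gamma> y)"
    using P1 by (simp add: adj_spectrum_def)
  have part2: "min_degree_at_least G1 2 \<and> min_degree_at_least G2 2 \<and>
          (\<Prod>v \<in> verts G1 - {x1}. int (degree G1 v) - 1) \<noteq>
          (\<Prod>v \<in> verts G2 - {x2}. int (degree G2 v) - 1) \<longrightarrow>
          (\<forall>(\<Gamma> :: 'b graph) y. simple_graph \<Gamma> \<and> y \<in> verts \<Gamma> \<longrightarrow>
            ihara_zeta (coalescence G1 x1 \<Gamma> y) \<noteq> ihara_zeta (coalescence G2 x2 \<Gamma> y))"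
  proof (intro impI allI)
    fix \<Gamma> :: "'b graph" and y
    assume h: "min_degree_at_least G1 2 \<and> min_degree_at_least G2 2 \<and>
          (\<Prod>v \<in> verts G1 - {x1}. int (degree G1 v) - 1) \<noteq>
          (\<Prod>v \<in> verts G2 - {x2}. int (degree G2 v) - 1)"
      and g: "simple_graph \<Gamma> \<and> y \<in> verts \<Gamma>"
    have dx1: "degree G1 x1 \<ge> 2" using h x1 by (simp add: min_degree_at_least_def)
    have U: "(\<Prod>u\<in>verts G1 - {x1}. real (degree G1 u) - 1) \<noteq> (\<Prod>u\<in>verts G2 - {x2}. real (degree G2 u) - 1)"
      using h int_to_real_prod(1)[of "degree G1" "verts G1 - {x1}"] int_to_real_prod(1)[of "degree G2" "verts G2 - {x2}"]
      by (metis of_int_eq_iff)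
    have ne: "ihara_poly (coalescence G1 x1 \<Gamma> y) \<noteq> ihara_poly (coalescence G2 x2 \<Gamma> y)"
      by (rule part2_core[OF G1 G2 x1 x2 c12 dx dx1 U]) (use g in auto)
    show "ihara_zeta (coalescence G1 x1 \<Gamma> y) \<noteq> ihara_zeta (coalescence G2 x2 \<Gamma> y)"
    proof
      assume "ihara_zeta (coalescence G1 x1 \<Gamma> y) = ihara_zeta (coalescence G2 x2 \<Gamma> y)"
      hence "ihara_poly (coalescence G1 x1 \<Gamma> y) = ihara_poly (coalescence G2 x2 \<Gamma> y)"
        by (rule zeta_cancel[OF simple_coal[OF G1 conjunct1[OF g] x1] simple_coal[OF G2 conjunct1[OF g] x2]
            cH[OF conjunct1[OF g] conjunct2[OF g]] mH[OF conjunct1[OF g] conjunct2[OF g]]])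
      thus False using ne by simp
    qed
  qed
  have part3: "min_degree_at_least G1 1 \<and> min_degree_at_least G2 1 \<and>
          (\<Prod>v \<in> verts G1 - {x1}. int (degree G1 v)) \<noteq>
          (\<Prod>v \<in> verts G2 - {x2}. int (degree G2 v)) \<longrightarrow>
          (\<forall>(\<Gamma> :: 'b graph) y. simple_graph \<Gamma> \<and> y \<in> verts \<Gamma> \<longrightarrow>
            ihara_zeta (cone (coalescence G1 x1 \<Gamma> y)) \<noteq>
            ihara_zeta (cone (coalescence G2 x2 \<Gamma> y)))"
  proof (intro impI allI)
    fix \<Gamma> :: "'b graph" and y
    assume h: "min_degree_at_least G1 1 \<and> min_degree_at_least G2 1 \<and>
          (\<Prod>v \<in> verts G1 - {x1}. int (degree G1 v)) \<noteq>
          (\<Prod>v \<in> verts G2 - {x2}. int (degree G2 v))"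
      and g: "simple_graph \<Gamma> \<and> y \<in> verts \<Gamma>"
    have dx1: "degree G1 x1 \<ge> 1" using h x1 by (simp add: min_degree_at_least_def)
    have c2: "card (verts G1) \<ge> 2" by (rule card_ge2_of_degree[OF G1 x1 dx1])
    have U: "(\<Prod>u\<in>verts G1 - {x1}. real (degree G1 u)) \<noteq> (\<Prod>u\<in>verts G2 - {x2}. real (degree G2 u))"
      using h int_to_real_prod(2)[of "degree G1" "verts G1 - {x1}"] int_to_real_prod(2)[of "degree G2" "verts G2 - {x2}"]
      by (metis of_int_eq_iff)
    have ne: "ihara_poly (cone (coalescence G1 x1 \<Gamma> y)) \<noteq> ihara_poly (cone (coalescence G2 x2 \<Gamma> y))"
      by (rule part3_core[OF G1 G2 x1 x2 c12 c2 dx dx1 U]) (use g in auto)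
    have S1: "simple_graph (coalescence G1 x1 \<Gamma> y)" using simple_coal[OF G1 conjunct1[OF g] x1] .
    have S2: "simple_graph (coalescence G2 x2 \<Gamma> y)" using simple_coal[OF G2 conjunct1[OF g] x2] .
    have cC: "card (verts (cone (coalescence G1 x1 \<Gamma> y))) = card (verts (cone (coalescence G2 x2 \<Gamma> y)))"
      using card_cone[OF S1] card_cone[OF S2] cH g by simp
    have mC: "num_edges (cone (coalescence G1 x1 \<Gamma> y)) = num_edges (cone (coalescence G2 x2 \<Gamma> y))"
      using num_edges_cone[OF S1] num_edges_cone[OF S2] cH mH g by simp
    show "ihara_zeta (cone (coalescence G1 x1 \<Gamma> y)) \<noteq> ihara_zeta (cone (coalescence G2 x2 \<Gamma> y))"
    proof
      assume "ihara_zeta (cone (coalescence G1 x1 \<Gamma> y)) = ihara_zeta (cone (coalescence G2 x2 \<Gamma> y))"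
      hence "ihara_poly (cone (coalescence G1 x1 \<Gamma> y)) = ihara_poly (cone (coalescence G2 x2 \<Gamma> y))"
        by (rule zeta_cancel[OF simple_cone[OF S1] simple_cone[OF S2] cC mC])
      thus False using ne by simp
    qed
  qed
  show ?thesis using part1 part2 part3 by blast
qed

end
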